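(* Let $\Omega \subset \mathbb{R}^{d}$ be a bounded domain with boundary $\partial\Omega$, and suppose the Dirichlet boundary condition is prescribed on the whole boundary, i.e. $\Gamma^{\mathrm{D}} = \partial\Omega$, with prescribed concentration $c^{\mathrm{p}}$ on $\Gamma^{\mathrm{D}}$. Let the diffusivity tensor $\mathbb{D}(\mathbf{x})$ be symmetric, positive definite, and continuously differentiable. Let $f \in L^{2}(\Omega)$ with $f(\mathbf{x}) \geq 0$ almost everywhere in $\Omega$. Let $(c,\mathbf{v})$, with $c \in H^{1}(\Omega)$ and $\mathbf{v} \in \mathcal{V}$, be a weak solution of the variational multiscale formulation \[ \left(\mathbf{w};\mathbb{D}^{-1}\mathbf{v}\right) - \left(\nabla \cdot \mathbf{w}; c\right) + \left(\mathbf{w}\cdot \mathbf{n};c^{\mathrm{p}}\right)_{\Gamma^{\mathrm{D}}} - \left(q;\nabla \cdot \mathbf{v} - f \right) - \frac{1}{2}\left(\mathbb{D}^{-1} \mathbf{w} + \nabla q;\ \mathbb{D}\left(\mathbb{D}^{-1}\mathbf{v} + \nabla c\right)\right) = 0 \] for all $q \in H^{1}(\Omega)$ and all $\mathbf{w} \in \mathcal{W}$, and assume that $c \in H^{2}(\Omega)\cap C^{1}(\Omega) \cap C^{0}(\bar{\Omega})$. Then \[ \min_{\bar{\Omega}} c(\mathbf{x}) = \min_{\partial \Omega} c(\mathbf{x}). \]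
   Context: This concerns the mixed (first-order) form of the steady diffusion (Poisson-type) equation: find the concentration $c$ and the auxiliary flux/velocity $\mathbf{v}$ with $\mathbb{D}^{-1}\mathbf{v} = -\nabla c$ and $\nabla\cdot\mathbf{v} = f$ in $\Omega$, and $c = c^{\mathrm{p}}$ on the Dirichlet boundary $\Gamma^{\mathrm{D}}$. Here $\mathbf{n}$ is the unit outward normal to $\partial\Omega$, $(a;b)$ denotes the $L^{2}(\Omega)$ inner product $\int_\Omega a\cdot b\,d\Omega$, and $(a;b)_{\Gamma^{\mathrm{D}}}$ denotes the $L^{2}$ inner product over $\Gamma^{\mathrm{D}}$. The spaces $\mathcal{V}$ and $\mathcal{W}$ are the trial and test spaces for the velocity in the mixed formulation; since the whole boundary is of Dirichlet type (no Neumann part), they are $H(\mathrm{div};\Omega) = \{\mathbf{w} \in (L^{2}(\Omega))^{d} : \nabla\cdot\mathbf{w} \in L^{2}(\Omega)\}$. The concentration trial space and its weighting-function space are both $H^{1}(\Omega)$ (the Dirichlet condition is imposed weakly via the boundary term). *)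

theory Defs
  imports "HOL-Analysis.Analysis"
begin

type_synonym 'n vec = "real ^ 'n"

definition C1_on :: "('n::finite) vec set \<Rightarrow> ('n vec \<Rightarrow> real) \<Rightarrow> bool" where
  "C1_on S u \<longleftrightarrow> (\<exists>g. (\<forall>x\<in>S. (u has_derivative (\<lambda>h. g x \<bullet> h)) (at x)) \<and> continuous_on S g)"

definition test_fun :: "('n::finite) vec set \<Rightarrow> ('n vec \<Rightarrow> real) \<Rightarrow> ('n vec \<Rightarrow> 'n vec) \<Rightarrow> bool" where
  "test_fun \<Omega> phi dphi \<longleftrightarrow>
     (\<forall>x. (phi has_derivative (\<lambda>h. dphi x \<bullet> h)) (at x)) \<and> continuous_on UNIV dphi \<and>
     compact (closure {x. phi x \<noteq> 0}) \<and> closure {x. phi x \<noteq> 0} \<subseteq> \<Omega>"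

definition L2 :: "('n::finite) vec set \<Rightarrow> ('n vec \<Rightarrow> real) \<Rightarrow> bool" where
  "L2 \<Omega> u \<longleftrightarrow> u \<in> borel_measurable (lebesgue_on \<Omega>) \<and> integrable (lebesgue_on \<Omega>) (\<lambda>x. (u x)\<^sup>2)"

definition L2v :: "('n::finite) vec set \<Rightarrow> ('n vec \<Rightarrow> 'n vec) \<Rightarrow> bool" where
  "L2v \<Omega> w \<longleftrightarrow> w \<in> borel_measurable (lebesgue_on \<Omega>) \<and> integrable (lebesgue_on \<Omega>) (\<lambda>x. (norm (w x))\<^sup>2)"

definition is_weak_grad :: "('n::finite) vec set \<Rightarrow> ('n vec \<Rightarrow> real) \<Rightarrow> ('n vec \<Rightarrow> 'n vec) \<Rightarrow> bool" where
  "is_weak_grad \<Omega> u g \<longleftrightarrow> L2v \<Omega> g \<and>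
     (\<forall>phi dphi. test_fun \<Omega> phi dphi \<longrightarrow>
        (LINT x|lebesgue_on \<Omega>. u x *\<^sub>R dphi x) = - (LINT x|lebesgue_on \<Omega>. phi x *\<^sub>R g x))"

definition is_weak_div :: "('n::finite) vec set \<Rightarrow> ('n vec \<Rightarrow> 'n vec) \<Rightarrow> ('n vec \<Rightarrow> real) \<Rightarrow> bool" where
  "is_weak_div \<Omega> w h \<longleftrightarrow> L2 \<Omega> h \<and>
     (\<forall>phi dphi. test_fun \<Omega> phi dphi \<longrightarrow>
        (LINT x|lebesgue_on \<Omega>. w x \<bullet> dphi x) = - (LINT x|lebesgue_on \<Omega>. phi x * h x))"

definition wgrad :: "('n::finite) vec set \<Rightarrow> ('n vec \<Rightarrow> real) \<Rightarrow> ('n vec \<Rightarrow> 'n vec)" where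
  "wgrad \<Omega> u = (SOME g. is_weak_grad \<Omega> u g)"

definition wdiv :: "('n::finite) vec set \<Rightarrow> ('n vec \<Rightarrow> 'n vec) \<Rightarrow> ('n vec \<Rightarrow> real)" where
  "wdiv \<Omega> w = (SOME h. is_weak_div \<Omega> w h)"

definition H1 :: "('n::finite) vec set \<Rightarrow> ('n vec \<Rightarrow> real) \<Rightarrow> bool" where
  "H1 \<Omega> u \<longleftrightarrow> L2 \<Omega> u \<and> (\<exists>g. is_weak_grad \<Omega> u g)"

definition H2 :: "('n::finite) vec set \<Rightarrow> ('n vec \<Rightarrow> real) \<Rightarrow> bool" where
  "H2 \<Omega> u \<longleftrightarrow> H1 \<Omega> u \<and> (\<forall>i. H1 \<Omega> (\<lambda>x. wgrad \<Omega> u x $ i))"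

definition Hdiv :: "('n::finite) vec set \<Rightarrow> ('n vec \<Rightarrow> 'n vec) \<Rightarrow> bool" where
  "Hdiv \<Omega> w \<longleftrightarrow> L2v \<Omega> w \<and> (\<exists>h. is_weak_div \<Omega> w h)"

text \<open>Boundary pairing (w.n ; c^p) over the Dirichlet boundary = whole boundary, where
  c^p is given as the boundary trace of Cp in H^1(Omega); defined by Green's formula
  (the standard definition of the normal-trace duality for w in H(div)).\<close>
definition bdry_pair :: "('n::finite) vec set \<Rightarrow> ('n vec \<Rightarrow> 'n vec) \<Rightarrow> ('n vec \<Rightarrow> real) \<Rightarrow> real" where
  "bdry_pair \<Omega> w Cp = (LINT x|lebesgue_on \<Omega>. wdiv \<Omega> w x * Cp x)
                       + (LINT x|lebesgue_on \<Omega>. w x \<bullet> wgrad \<Omega> Cp x)"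

end

theory Submission
  imports Defs
begin

lemma deriv_zero_outside:
  fixes u :: "real^'n::finite \<Rightarrow> real"
  assumes der: "(u has_derivative (\<lambda>h. d \<bullet> h)) (at y)"
    and S: "open S" "y \<in> S" "\<And>x. x \<in> S \<Longrightarrow> u x = 0"
  shows "d = 0"
proof -
  have "((\<lambda>x. 0::real) has_derivative (\<lambda>h. 0)) (at y)" by simp
  then have "(u has_derivative (\<lambda>h. 0)) (at y)"
    by (rule has_derivative_transform_within_open[OF _ S(1,2)]) (use S(3) in auto)
  from has_derivative_unique[OF der this] have "\<And>h. d \<bullet> h = 0" by meson
  from this[of d] show ?thesis by simp
qed

lemma ibp_zero:
  fixes u :: "real^'n::finite \<Rightarrow> real" and du :: "real^'n \<Rightarrow> real^'n"
  assumes der: "\<And>x. (u has_derivative (\<lambda>h. du x \<bullet> h)) (at x)"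
    and cont: "continuous_on UNIV du"
    and supp: "\<And>x. R < norm x \<Longrightarrow> u x = 0"
  shows "integrable lborel (\<lambda>x. du x $ i) \<and> (LINT x|lborel. du x $ i) = 0"
proof -
  have du0: "du y = 0" if "R < norm y" for y
    by (rule deriv_zero_outside[OF der, of "{x. R < norm x}"])
       (use that supp in \<open>auto intro: open_Collect_less continuous_intros\<close>)
  have "compact (du ` cball 0 R)"
    by (rule compact_continuous_image) (use cont continuous_on_subset in auto)
  then obtain C0 where C0: "\<And>y. y \<in> cball 0 R \<Longrightarrow> norm (du y) \<le> C0"
    using compact_imp_bounded bounded_iff by (metis image_eqI)
  define C where "C = max C0 0"
  have Cb: "\<bar>du y $ i\<bar> \<le> C" for y
  proof (cases "R < norm y")
    case True then show ?thesis using du0[OF True] by (simp add: C_def)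
  next
    case False
    then have "norm (du y) \<le> C0" using C0 by auto
    then show ?thesis using component_le_norm_cart[of "du y" i] by (simp add: C_def)
  qed
  have ucont: "continuous_on UNIV u"
    using der has_derivative_continuous continuous_at_imp_continuous_on by blast
  have ucont': "continuous (at x) u" for x
    using der has_derivative_continuous by blast
  have uint: "integrable lborel u"
  proof -
    have "integrable lborel (\<lambda>x. indicator (cball 0 R) x *\<^sub>R u x)"
      by (rule borel_integrable_compact) (use ucont continuous_on_subset in auto)
    moreover have "(\<lambda>x. indicator (cball 0 R) x *\<^sub>R u x) = u"
      using supp by (auto simp: indicator_def fun_eq_iff)
    ultimately show ?thesis by simp
  qed
  have umeas: "u \<in> borel_measurable borel"
    using ucont by (simp add: borel_measurable_continuous_onI)
  have shift: "(LINT x|lborel. u (a + x)) = (LINT x|lborel. u x)" for a :: "real^'n"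
  proof -
    have "(LINT x|lborel. u x) = integral\<^sup>L (distr lborel borel ((+) a)) u"
      by (simp add: lborel_distr_plus)
    also have "\<dots> = (LINT x|lborel. u (a + x))"
      by (rule integral_distr) (auto simp: umeas)
    finally show ?thesis by simp
  qed
  have shift_int: "integrable lborel (\<lambda>x. u (a + x))" for a :: "real^'n"
  proof -
    have "integrable (distr lborel borel ((+) a)) u" by (simp add: lborel_distr_plus uint)
    then show ?thesis by (subst (asm) integrable_distr_eq) (auto simp: umeas)
  qed
  define e :: "real^'n" where "e = axis i 1"
  define h :: "nat \<Rightarrow> real" where "h m = 1 / real (Suc m)" for m
  define s where "s m x = (u (x + h m *\<^sub>R e) - u x) / h m" for m x
  have hpos: "0 < h m" "h m \<le> 1" for m by (auto simp: h_def field_simps)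
  have gder: "((\<lambda>t. u (x + t *\<^sub>R e)) has_real_derivative du (x + t *\<^sub>R e) $ i) (at t)" for x t
  proof -
    have "((\<lambda>t. x + t *\<^sub>R e) has_derivative (\<lambda>t. t *\<^sub>R e)) (at t)"
      by (auto intro!: derivative_eq_intros)
    from has_derivative_compose[OF this der]
    have "((\<lambda>t. u (x + t *\<^sub>R e)) has_derivative (\<lambda>t'. du (x + t *\<^sub>R e) \<bullet> (t' *\<^sub>R e))) (at t)" .
    moreover have "(\<lambda>t'. du (x + t *\<^sub>R e) \<bullet> (t' *\<^sub>R e)) = (*) (du (x + t *\<^sub>R e) $ i)"
      by (auto simp: fun_eq_iff e_def inner_axis)
    ultimately show ?thesis
      by (simp add: has_field_derivative_def)
  qed
  have lim: "(\<lambda>m. s m x) \<longlonglongrightarrow> du x $ i" for x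
  proof -
    from gder[of x 0, unfolded DERIV_def]
    have L: "((\<lambda>t. (u (x + t *\<^sub>R e) - u x) / t) \<longlongrightarrow> du x $ i) (at 0)" by simp
    have "h \<longlonglongrightarrow> 0" unfolding h_def by (rule LIMSEQ_Suc[OF lim_const_over_n])
    moreover have "\<forall>m. h m \<noteq> 0" using hpos by (metis less_irrefl)
    ultimately show ?thesis
      using L unfolding LIMSEQ_SEQ_conv[symmetric] s_def by blast
  qed
  have bound: "\<bar>s m x\<bar> \<le> indicator (cball 0 (R+1)) x *\<^sub>R C" for m x
  proof -
    obtain z where z: "0 < z" "z < h m"
      "u (x + h m *\<^sub>R e) - u (x + 0 *\<^sub>R e) = (h m - 0) * du (x + z *\<^sub>R e) $ i"
      using MVT2[OF hpos(1)[of m], of "\<lambda>t. u (x + t *\<^sub>R e)" "\<lambda>t. du (x + t *\<^sub>R e) $ i"] gder by blast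
    have s1: "\<bar>s m x\<bar> \<le> C"
      using z hpos[of m] Cb[of "x + z *\<^sub>R e"] by (simp add: s_def)
    show ?thesis
    proof (cases "norm x \<le> R + 1")
      case True then show ?thesis using s1 by (simp add: indicator_def dist_norm)
    next
      case False
      have ne: "norm e = 1" by (simp add: e_def)
      have "norm (x + h m *\<^sub>R e) \<ge> norm x - h m"
        using norm_triangle_sub[of x "x + h m *\<^sub>R e"] hpos[of m] ne by simp
      then have "R < norm (x + h m *\<^sub>R e)" using False hpos[of m] by linarith
      then have "s m x = 0" using supp False by (simp add: s_def)
      then show ?thesis using False by (simp add: indicator_def dist_norm)
    qed
  qed
  have scont: "continuous_on UNIV (s m)" for m
  proof -
    have "continuous_on UNIV (\<lambda>x. u (x + h m *\<^sub>R e))"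
      by (rule continuous_on_compose2[OF ucont]) (auto intro!: continuous_intros)
    moreover have "h m \<noteq> 0" using hpos[of m] by simp
    ultimately show ?thesis unfolding s_def using ucont by (auto intro!: continuous_intros)
  qed
  have smeas: "s m \<in> borel_measurable lborel" for m
    using scont by (simp add: borel_measurable_continuous_onI)
  have dmeas: "(\<lambda>x. du x $ i) \<in> borel_measurable lborel"
    using cont by (auto intro!: borel_measurable_continuous_onI continuous_intros)
  have wint: "integrable lborel (\<lambda>x. indicator (cball 0 (R+1)) x *\<^sub>R C)"
    by (rule borel_integrable_compact) auto
  have s0: "integral\<^sup>L lborel (s m) = 0" for m
  proof -
    have "integral\<^sup>L lborel (s m) = ((LINT x|lborel. u (h m *\<^sub>R e + x)) - (LINT x|lborel. u x)) / h m"
    proof -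
      have i1: "integrable lborel (\<lambda>x. u (x + h m *\<^sub>R e))"
        using shift_int[of "h m *\<^sub>R e"] by (simp add: add.commute)
      show ?thesis unfolding s_def
        by (simp add: Bochner_Integration.integral_diff[OF i1 uint] add.commute)
    qed
    then show ?thesis by (simp add: shift)
  qed
  have "integrable lborel (\<lambda>x. du x $ i)"
    by (rule integrable_dominated_convergence[where s=s, OF dmeas smeas wint]) (use lim bound in auto)
  moreover have "(\<lambda>m. integral\<^sup>L lborel (s m)) \<longlonglongrightarrow> (LINT x|lborel. du x $ i)"
    by (rule integral_dominated_convergence[where s=s, OF dmeas smeas wint]) (use lim bound in auto)
  then have "(LINT x|lborel. du x $ i) = 0" using s0 LIMSEQ_unique by (simp add: LIMSEQ_const_iff)
  ultimately show ?thesis by simp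
qed


lemma restrict_compact_int:
  fixes g :: "real^'n::finite \<Rightarrow> 'b::{banach, second_countable_topology}"
  assumes O: "\<Omega> \<in> sets lebesgue" and K: "compact K" "K \<subseteq> \<Omega>" and g: "continuous_on K g"
    and z: "\<And>x. x \<in> \<Omega> \<Longrightarrow> x \<notin> K \<Longrightarrow> g x = 0"
  shows "integrable (lebesgue_on \<Omega>) g"
    "(LINT x|lebesgue_on \<Omega>. g x) = (LINT x|lborel. indicator K x *\<^sub>R g x)"
proof -
  have i: "integrable lborel (\<lambda>x. indicator K x *\<^sub>R g x)"
    by (rule borel_integrable_compact[OF K(1) g])
  have m: "(\<lambda>x. indicator K x *\<^sub>R g x) \<in> borel_measurable lborel"
    using i by (rule borel_measurable_integrable)
  have eq: "(\<lambda>x. indicator \<Omega> x *\<^sub>R g x) = (\<lambda>x. indicator K x *\<^sub>R g x)"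
    using z K(2) by (auto simp: fun_eq_iff indicator_def)
  show "integrable (lebesgue_on \<Omega>) g"
    using i m by (simp add: integrable_restrict_space O eq integrable_completion)
  show "(LINT x|lebesgue_on \<Omega>. g x) = (LINT x|lborel. indicator K x *\<^sub>R g x)"
    using m by (simp add: integral_restrict_space O eq integral_completion)
qed

definition supp :: "(real^'n::finite \<Rightarrow> real) \<Rightarrow> (real^'n) set" where
  "supp phi = closure {x. phi x \<noteq> 0}"

lemma test_fun_facts:
  fixes \<Omega> :: "(real^'n::finite) set"
  assumes t: "test_fun \<Omega> phi dphi"
  shows "compact (supp phi)" "supp phi \<subseteq> \<Omega>" "\<And>x. x \<notin> supp phi \<Longrightarrow> phi x = 0"
    "\<And>x. x \<notin> supp phi \<Longrightarrow> dphi x = 0" "continuous_on UNIV phi" "continuous_on UNIV dphi"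
    "\<And>x. (phi has_derivative (\<lambda>h. dphi x \<bullet> h)) (at x)"
proof -
  show c: "compact (supp phi)" "supp phi \<subseteq> \<Omega>" using t by (auto simp: test_fun_def supp_def)
  show z: "\<And>x. x \<notin> supp phi \<Longrightarrow> phi x = 0" unfolding supp_def by (metis (mono_tags) closure_subset mem_Collect_eq subsetD)
  show d: "\<And>x. (phi has_derivative (\<lambda>h. dphi x \<bullet> h)) (at x)" using t by (auto simp: test_fun_def)
  show "\<And>x. x \<notin> supp phi \<Longrightarrow> dphi x = 0"
    by (rule deriv_zero_outside[OF d, of "- supp phi"]) (use z c compact_imp_closed in auto)
  show "continuous_on UNIV dphi" using t by (auto simp: test_fun_def)
  show "continuous_on UNIV phi"
    by (rule continuous_at_imp_continuous_on) (use d has_derivative_continuous in blast)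
qed

lemma ibp_prod:
  fixes \<Omega> :: "(real^'n::finite) set" and c :: "real^'n \<Rightarrow> real"
  assumes O: "open \<Omega>"
    and cder: "\<And>x. x \<in> \<Omega> \<Longrightarrow> (c has_derivative (\<lambda>h. gc x \<bullet> h)) (at x)"
    and gcont: "continuous_on \<Omega> gc"
    and t: "test_fun \<Omega> phi dphi"
  shows "integrable (lebesgue_on \<Omega>) (\<lambda>x. c x * dphi x $ i)"
    "integrable (lebesgue_on \<Omega>) (\<lambda>x. phi x * gc x $ i)"
    "(LINT x|lebesgue_on \<Omega>. c x * dphi x $ i) = - (LINT x|lebesgue_on \<Omega>. phi x * gc x $ i)"
proof -
  note T = test_fun_facts[OF t]
  define K where "K = supp phi"
  have K: "compact K" "K \<subseteq> \<Omega>" using T K_def by auto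
  have Osets: "\<Omega> \<in> sets lebesgue" using O by simp
  have ccont: "continuous_on \<Omega> c"
    by (rule continuous_at_imp_continuous_on) (use cder has_derivative_continuous in blast)
  have ccontK: "continuous_on K c" "continuous_on K gc"
    using ccont gcont K continuous_on_subset by auto
  have pK: "continuous_on K phi" "continuous_on K dphi"
    using continuous_on_subset[OF T(5)] continuous_on_subset[OF T(6)] by auto
  have i1: "integrable (lebesgue_on \<Omega>) (\<lambda>x. c x * dphi x $ i)"
    "(LINT x|lebesgue_on \<Omega>. c x * dphi x $ i) = (LINT x|lborel. indicator K x *\<^sub>R (c x * dphi x $ i))"
    by (rule restrict_compact_int[OF Osets K]; use ccontK pK T(4) K_def in \<open>auto intro!: continuous_intros\<close>)+
  have i2: "integrable (lebesgue_on \<Omega>) (\<lambda>x. phi x * gc x $ i)"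
    "(LINT x|lebesgue_on \<Omega>. phi x * gc x $ i) = (LINT x|lborel. indicator K x *\<^sub>R (phi x * gc x $ i))"
    by (rule restrict_compact_int[OF Osets K]; use ccontK pK T(3) K_def in \<open>auto intro!: continuous_intros\<close>)+
  show "integrable (lebesgue_on \<Omega>) (\<lambda>x. c x * dphi x $ i)"
    "integrable (lebesgue_on \<Omega>) (\<lambda>x. phi x * gc x $ i)" using i1 i2 by auto
  define u where "u x = c x * phi x" for x
  define du where "du x = (if x \<in> \<Omega> then phi x *\<^sub>R gc x + c x *\<^sub>R dphi x else 0)" for x
  have du0: "du x = 0" if "x \<notin> K" for x
    using that T(3,4) by (auto simp: du_def K_def)
  have u0: "u x = 0" if "x \<notin> K" for x
    using that T(3) by (auto simp: u_def K_def)
  have Kc: "open (- K)" using K compact_imp_closed by auto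
  have der: "(u has_derivative (\<lambda>h. du x \<bullet> h)) (at x)" for x
  proof (cases "x \<in> \<Omega>")
    case True
    have "((\<lambda>x. c x * phi x) has_derivative (\<lambda>h. c x * (dphi x \<bullet> h) + (gc x \<bullet> h) * phi x)) (at x)"
      by (rule has_derivative_mult[OF cder[OF True] T(7)])
    moreover have "(\<lambda>h. c x * (dphi x \<bullet> h) + (gc x \<bullet> h) * phi x) = (\<lambda>h. du x \<bullet> h)"
      using True by (auto simp: fun_eq_iff du_def inner_add_left algebra_simps)
    ultimately show ?thesis by (simp add: u_def[abs_def])
  next
    case False
    then have xK: "x \<in> - K" using K by auto
    have "((\<lambda>x. 0::real) has_derivative (\<lambda>h. 0)) (at x)" by simp
    then have "(u has_derivative (\<lambda>h. 0)) (at x)"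
      by (rule has_derivative_transform_within_open[OF _ Kc xK]) (use u0 in auto)
    then show ?thesis using False by (simp add: du_def)
  qed
  have dcont: "continuous_on UNIV du"
  proof -
    have "isCont du x" for x
    proof (cases "x \<in> K")
      case True
      then have xO: "x \<in> \<Omega>" using K by auto
      have "continuous_on \<Omega> (\<lambda>x. phi x *\<^sub>R gc x + c x *\<^sub>R dphi x)"
      proof -
        have "continuous_on \<Omega> phi" "continuous_on \<Omega> dphi"
          using continuous_on_subset[OF T(5)] continuous_on_subset[OF T(6)] by auto
        then show ?thesis using ccont gcont by (intro continuous_intros)
      qed
      then have "isCont (\<lambda>x. phi x *\<^sub>R gc x + c x *\<^sub>R dphi x) x"
        using O xO continuous_on_eq_continuous_at by blast
      moreover have ev: "eventually (\<lambda>y. du y = phi y *\<^sub>R gc y + c y *\<^sub>R dphi y) (nhds x)"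
        using eventually_nhds_in_open[OF O xO] by eventually_elim (simp add: du_def)
      ultimately show ?thesis using isCont_cong[OF ev] by simp
    next
      case False
      have xK: "x \<in> - K" using False by simp
      have ev: "eventually (\<lambda>y. du y = 0) (nhds x)"
        using eventually_nhds_in_open[OF Kc xK] by eventually_elim (use du0 in simp)
      show ?thesis using isCont_cong[OF ev] by simp
    qed
    then show ?thesis by (simp add: continuous_at_imp_continuous_on)
  qed
  obtain R where R: "\<And>x. x \<in> K \<Longrightarrow> norm x \<le> R"
  proof -
    have "bounded K" using K compact_imp_bounded by auto
    then show ?thesis using that unfolding bounded_iff by blast
  qed
  have supp': "u x = 0" if "R < norm x" for x using R u0 that by force
  from ibp_zero[OF der dcont supp', where i=i]
  have z: "(LINT x|lborel. du x $ i) = 0" by simp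
  have "(LINT x|lborel. du x $ i) = (LINT x|lborel. indicator K x *\<^sub>R (phi x * gc x $ i) + indicator K x *\<^sub>R (c x * dphi x $ i))"
  proof (rule Bochner_Integration.integral_cong[OF refl])
    fix x show "du x $ i = indicator K x *\<^sub>R (phi x * gc x $ i) + indicator K x *\<^sub>R (c x * dphi x $ i)"
    proof (cases "x \<in> K")
      case True then show ?thesis using K by (auto simp: du_def)
    next
      case False then show ?thesis using du0[OF False] by simp
    qed
  qed
  also have "\<dots> = (LINT x|lebesgue_on \<Omega>. phi x * gc x $ i) + (LINT x|lebesgue_on \<Omega>. c x * dphi x $ i)"
  proof -
    have j1: "integrable lborel (\<lambda>x. indicator K x *\<^sub>R (phi x * gc x $ i))"
      by (rule borel_integrable_compact[OF K(1)]) (use ccontK pK in \<open>auto intro!: continuous_intros\<close>)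
    have j2: "integrable lborel (\<lambda>x. indicator K x *\<^sub>R (c x * dphi x $ i))"
      by (rule borel_integrable_compact[OF K(1)]) (use ccontK pK in \<open>auto intro!: continuous_intros\<close>)
    show ?thesis using Bochner_Integration.integral_add[OF j1 j2] i1(2) i2(2) by simp
  qed
  finally show "(LINT x|lebesgue_on \<Omega>. c x * dphi x $ i) = - (LINT x|lebesgue_on \<Omega>. phi x * gc x $ i)"
    using z by simp
qed


definition C1g :: "(real^'n::finite \<Rightarrow> real) \<Rightarrow> (real^'n \<Rightarrow> real^'n) \<Rightarrow> bool" where
  "C1g f df \<longleftrightarrow> (\<forall>x. (f has_derivative (\<lambda>h. df x \<bullet> h)) (at x)) \<and> continuous_on UNIV df"

lemma C1g_const: "C1g (\<lambda>x. c) (\<lambda>x. 0)"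
  by (simp add: C1g_def)

lemma C1g_mult:
  assumes "C1g f df" "C1g g dg"
  shows "C1g (\<lambda>x. f x * g x) (\<lambda>x. f x *\<^sub>R dg x + g x *\<^sub>R df x)"
proof -
  have fc: "continuous_on UNIV f" "continuous_on UNIV g"
    using assms unfolding C1g_def
    by (meson continuous_at_imp_continuous_on has_derivative_continuous)+
  have "((\<lambda>x. f x * g x) has_derivative (\<lambda>h. (f x *\<^sub>R dg x + g x *\<^sub>R df x) \<bullet> h)) (at x)" for x
  proof -
    have "((\<lambda>x. f x * g x) has_derivative (\<lambda>h. f x * (dg x \<bullet> h) + (df x \<bullet> h) * g x)) (at x)"
      using assms by (intro has_derivative_mult) (auto simp: C1g_def)
    moreover have "(\<lambda>h. f x * (dg x \<bullet> h) + (df x \<bullet> h) * g x) = (\<lambda>h. (f x *\<^sub>R dg x + g x *\<^sub>R df x) \<bullet> h)"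
      by (auto simp: fun_eq_iff inner_add_left algebra_simps)
    ultimately show ?thesis by simp
  qed
  moreover have "continuous_on UNIV (\<lambda>x. f x *\<^sub>R dg x + g x *\<^sub>R df x)"
    using assms fc unfolding C1g_def by (intro continuous_intros) auto
  ultimately show ?thesis by (simp add: C1g_def)
qed

lemma C1g_prod:
  assumes "finite I" "\<And>j. j \<in> I \<Longrightarrow> \<exists>d. C1g (F j) d"
  shows "\<exists>d. C1g (\<lambda>x. \<Prod>j\<in>I. F j x) d"
  using assms
proof (induction I rule: finite_induct)
  case empty then show ?case using C1g_const by auto
next
  case (insert a I)
  obtain d1 where d1: "C1g (F a) d1" using insert by auto
  obtain d2 where d2: "C1g (\<lambda>x. \<Prod>j\<in>I. F j x) d2" using insert by auto
  show ?case using C1g_mult[OF d1 d2] insert(1,2) by auto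
qed

lemma C1g_coord:
  assumes d: "\<And>t. (th has_real_derivative th' t) (at t)" and c: "continuous_on UNIV th'"
  shows "C1g (\<lambda>x::real^'n::finite. th (a * x$j + b)) (\<lambda>x. (th' (a * x$j + b) * a) *\<^sub>R axis j (1::real))"
proof -
  have "((\<lambda>x::real^'n. th (a * x$j + b)) has_derivative (\<lambda>h. ((th' (a * x$j + b) * a) *\<^sub>R axis j (1::real)) \<bullet> h)) (at x)" for x
  proof -
    have l: "((\<lambda>x::real^'n. a * x$j + b) has_derivative (\<lambda>h. a * h$j)) (at x)"
      by (auto intro!: derivative_eq_intros bounded_linear.has_derivative[OF bounded_linear_vec_nth])
    have "(th has_derivative (*) (th' (a * x$j + b))) (at (a * x$j + b))"
      using d[of "a * x$j + b"] by (simp add: has_field_derivative_def)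
    from has_derivative_compose[OF l this]
    have "((\<lambda>x::real^'n. th (a * x$j + b)) has_derivative (\<lambda>h. th' (a * x$j + b) * (a * h$j))) (at x)" .
    moreover have "(\<lambda>h. th' (a * x$j + b) * (a * h$j)) = (\<lambda>h::real^'n. ((th' (a * x$j + b) * a) *\<^sub>R axis j (1::real)) \<bullet> h)"
      by (auto simp: fun_eq_iff inner_axis' algebra_simps)
    ultimately show ?thesis by simp
  qed
  moreover have "continuous_on UNIV (\<lambda>x::real^'n. (th' (a * x$j + b) * a) *\<^sub>R axis j (1::real))"
  proof -
    have "continuous_on UNIV (\<lambda>x::real^'n. th' (a * x$j + b))"
      by (rule continuous_on_compose2[OF c]) (auto intro!: continuous_intros)
    then show ?thesis by (rule continuous_on_scaleR[OF continuous_on_mult[OF _ continuous_on_const] continuous_on_const])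
  qed
  ultimately show ?thesis by (simp add: C1g_def)
qed

lemma pp_deriv: "((\<lambda>t::real. (max 0 t)^2) has_real_derivative 2 * max 0 t) (at t)"
proof (cases "t = 0")
  case True
  have "((\<lambda>h::real. ((max 0 h)^2 - (max 0 0)^2) / (h - 0)) \<longlongrightarrow> 0) (at 0)"
  proof (rule Lim_null_comparison)
    show "eventually (\<lambda>h::real. norm (((max 0 h)^2 - (max 0 0)^2) / (h - 0)) \<le> \<bar>h\<bar>) (at 0)"
      by (intro always_eventually allI) (auto simp: max_def abs_if power2_eq_square divide_simps)
    show "((\<lambda>h::real. \<bar>h\<bar>) \<longlongrightarrow> 0) (at 0)"
      using tendsto_rabs[OF tendsto_ident_at[of "0::real" UNIV]] by simp
  qed
  then show ?thesis using True by (simp add: has_field_derivative_iff)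
next
  case False
  show ?thesis
  proof (cases "t > 0")
    case True
    have "((\<lambda>s. s^2) has_real_derivative 2 * t) (at t)"
      by (auto intro!: derivative_eq_intros)
    then have "((\<lambda>s. (max 0 s)^2) has_real_derivative 2 * t) (at t)"
      by (rule has_field_derivative_transform_within_open[of _ _ _ "{0<..}"]) (use True in auto)
    then show ?thesis using True by simp
  next
    case f2: False
    then have tn: "t < 0" using False by simp
    have "((\<lambda>s. 0::real) has_real_derivative 0) (at t)" by simp
    then have "((\<lambda>s. (max 0 s)^2) has_real_derivative 0) (at t)"
      by (rule has_field_derivative_transform_within_open[of _ _ _ "{..<0}"]) (use tn in auto)
    then show ?thesis using tn by simp
  qed
qed

definition sstep :: "real \<Rightarrow> real" where
  "sstep t = 2 * ((max 0 t)^2 - 2 * (max 0 (t - 1/2))^2 + (max 0 (t - 1))^2)"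

definition sstep' :: "real \<Rightarrow> real" where
  "sstep' t = 2 * (2 * max 0 t - 4 * max 0 (t - 1/2) + 2 * max 0 (t - 1))"

lemma sstep_deriv: "(sstep has_real_derivative sstep' t) (at t)"
proof -
  have a: "((\<lambda>t. (max 0 (t - c))^2) has_real_derivative 2 * max 0 (t - c)) (at t)" for c :: real
  proof -
    have d1: "((\<lambda>t. t - c) has_real_derivative 1) (at t)" by (auto intro!: derivative_eq_intros)
    from DERIV_chain2[OF pp_deriv[of "t - c"] d1] show ?thesis by simp
  qed
  have "((\<lambda>t. 2 * ((max 0 t)^2 - 2 * (max 0 (t - 1/2))^2 + (max 0 (t - 1))^2)) has_real_derivative
     2 * (2 * max 0 t - 2 * (2 * max 0 (t - 1/2)) + 2 * max 0 (t - 1))) (at t)"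
    by (intro DERIV_cmult DERIV_add DERIV_diff pp_deriv a)
  then show ?thesis unfolding sstep_def[abs_def] sstep'_def by simp
qed

lemma sstep'_cont: "continuous_on UNIV sstep'"
  unfolding sstep'_def[abs_def] by (intro continuous_intros)

lemma sstep_0: "t \<le> 0 \<Longrightarrow> sstep t = 0"
  by (simp add: sstep_def)

lemma sstep_1: "t \<ge> 1 \<Longrightarrow> sstep t = 1"
  by (simp add: sstep_def max_def power2_eq_square algebra_simps)

lemma sstep_bounds: "0 \<le> sstep t" "sstep t \<le> 1"
proof -
  consider "t \<le> 0" | "0 < t" "t \<le> 1/2" | "1/2 < t" "t < 1" | "1 \<le> t" by linarith
  then have "0 \<le> sstep t \<and> sstep t \<le> 1"
  proof cases
    case 2
    then have "sstep t = 2 * t^2" by (simp add: sstep_def max_def)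
    moreover have "t^2 \<le> 1/4" using 2 power_mono[of t "1/2" 2] by (simp add: power2_eq_square)
    ultimately show ?thesis by simp
  next
    case 3
    then have "sstep t = 1 - 2 * (1 - t)^2" by (simp add: sstep_def max_def power2_eq_square algebra_simps)
    moreover have "(1 - t)^2 \<le> 1/4" using 3 power_mono[of "1 - t" "1/2" 2] by (simp add: power2_eq_square)
    ultimately show ?thesis by simp
  qed (auto simp: sstep_0 sstep_1)
  then show "0 \<le> sstep t" "sstep t \<le> 1" by auto
qed


lemma cubes_zero_ae:
  fixes G :: "real^'n::finite \<Rightarrow> real"
  assumes G: "integrable lborel G"
    and z: "\<And>c d. (LINT x|lborel. indicator (cbox c d) x * G x) = 0"
  shows "AE x in lborel. G x = 0"
proof -
  define P where "P x = max 0 (G x)" for x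
  define N where "N x = max 0 (- G x)" for x
  have Pi: "integrable lborel P" unfolding P_def using G by (intro integrable_max) auto
  have Ni: "integrable lborel N" unfolding N_def using G by (intro integrable_max) auto
  have Pm[measurable]: "P \<in> borel_measurable lborel" using Pi by (rule borel_measurable_integrable)
  have Nm[measurable]: "N \<in> borel_measurable lborel" using Ni by (rule borel_measurable_integrable)
  define E where "E = range (\<lambda>(a, b). cbox a (b::real^'n))"
  have emeq: "emeasure (density lborel (\<lambda>x. ennreal (P x))) (cbox c d) =
              emeasure (density lborel (\<lambda>x. ennreal (N x))) (cbox c d)" for c d
  proof -
    have iP: "integrable lborel (\<lambda>x. indicator (cbox c d) x * P x)"
      using integrable_mult_indicator[of "cbox c d" lborel P] Pi by simp
    have iN: "integrable lborel (\<lambda>x. indicator (cbox c d) x * N x)"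
      using integrable_mult_indicator[of "cbox c d" lborel N] Ni by simp
    have "(LINT x|lborel. indicator (cbox c d) x * P x) - (LINT x|lborel. indicator (cbox c d) x * N x)
        = (LINT x|lborel. indicator (cbox c d) x * G x)"
      by (subst Bochner_Integration.integral_diff[OF iP iN, symmetric])
         (auto intro!: Bochner_Integration.integral_cong simp: P_def N_def indicator_def max_def)
    then have eqi: "(LINT x|lborel. indicator (cbox c d) x * P x) = (LINT x|lborel. indicator (cbox c d) x * N x)"
      using z by simp
    have "emeasure (density lborel (\<lambda>x. ennreal (P x))) (cbox c d) = (\<integral>\<^sup>+x. ennreal (indicator (cbox c d) x * P x) \<partial>lborel)"
      by (subst emeasure_density) (auto intro!: nn_integral_cong simp: indicator_def)
    also have "\<dots> = ennreal (LINT x|lborel. indicator (cbox c d) x * P x)"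
      by (rule nn_integral_eq_integral[OF iP]) (auto simp: P_def)
    also have "\<dots> = ennreal (LINT x|lborel. indicator (cbox c d) x * N x)" using eqi by simp
    also have "\<dots> = (\<integral>\<^sup>+x. ennreal (indicator (cbox c d) x * N x) \<partial>lborel)"
      by (rule nn_integral_eq_integral[OF iN, symmetric]) (auto simp: N_def)
    also have "\<dots> = emeasure (density lborel (\<lambda>x. ennreal (N x))) (cbox c d)"
      by (subst emeasure_density) (auto intro!: nn_integral_cong simp: indicator_def)
    finally show ?thesis .
  qed
  have sigE: "sets borel = sigma_sets UNIV E"
  proof -
    have "E = range (\<lambda>(a, b). {a..b::real^'n})" unfolding E_def by (simp add: interval_cbox_cart)
    then have "borel = sigma UNIV E" using borel_eq_atLeastAtMost by metis
    then show ?thesis by (metis sets_measure_of top.extremum Pow_UNIV)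
  qed
  have dens_eq: "density lborel (\<lambda>x. ennreal (P x)) = density lborel (\<lambda>x. ennreal (N x))"
  proof (rule measure_eqI_generator_eq[where E=E and \<Omega>=UNIV and A="\<lambda>i. cbox (- (real i *\<^sub>R 1)) (real i *\<^sub>R 1)"])
    show "Int_stable E" unfolding E_def
    proof (rule Int_stableI_image)
      fix i j :: "(real^'n) \<times> (real^'n)"
      show "\<exists>k\<in>UNIV. (case i of (a, b) \<Rightarrow> cbox a b) \<inter> (case j of (a, b) \<Rightarrow> cbox a b) = (case k of (a, b) \<Rightarrow> cbox a b)"
        by (cases i; cases j) (auto simp: Int_interval_cart interval_cbox_cart)
    qed
    show "E \<subseteq> Pow UNIV" by simp
    show "\<And>X. X \<in> E \<Longrightarrow> emeasure (density lborel (\<lambda>x. ennreal (P x))) X = emeasure (density lborel (\<lambda>x. ennreal (N x))) X"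
      using emeq unfolding E_def by auto
    show "sets (density lborel (\<lambda>x. ennreal (P x))) = sigma_sets UNIV E" using sigE by simp
    show "sets (density lborel (\<lambda>x. ennreal (N x))) = sigma_sets UNIV E" using sigE by simp
    show "range (\<lambda>i. cbox (- (real i *\<^sub>R 1)) (real i *\<^sub>R (1::real^'n))) \<subseteq> E" unfolding E_def by auto
    show "(\<Union>i. cbox (- (real i *\<^sub>R 1)) (real i *\<^sub>R (1::real^'n))) = UNIV"
    proof -
      have "x \<in> cbox (- (real (nat \<lceil>norm x\<rceil>) *\<^sub>R 1)) (real (nat \<lceil>norm x\<rceil>) *\<^sub>R (1::real^'n))" for x :: "real^'n"
      proof -
        have "\<bar>x $ j\<bar> \<le> real (nat \<lceil>norm x\<rceil>)" for j
          using component_le_norm_cart[of x j] by linarith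
        then show ?thesis unfolding mem_box_cart by (auto simp: abs_le_iff) (metis minus_le_iff)
      qed
      then show ?thesis by blast
    qed
    show "emeasure (density lborel (\<lambda>x. ennreal (P x))) (cbox (- (real i *\<^sub>R 1)) (real i *\<^sub>R 1)) \<noteq> \<infinity>" for i
    proof -
      have "emeasure (density lborel (\<lambda>x. ennreal (P x))) (cbox (- (real i *\<^sub>R 1)) (real i *\<^sub>R 1))
          \<le> emeasure (density lborel (\<lambda>x. ennreal (P x))) UNIV"
        by (rule emeasure_mono) auto
      also have "\<dots> = (\<integral>\<^sup>+x. ennreal (P x) \<partial>lborel)" by (simp add: emeasure_density)
      also have "\<dots> < \<infinity>" using Pi by (simp add: integrableD(2) P_def integrable_iff_bounded)
      finally show ?thesis by simp
    qed
  qed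
  have "AE x in lborel. ennreal (P x) = ennreal (N x)"
    using sigma_finite_measure.density_unique_iff[OF sigma_finite_lborel, of "\<lambda>x. ennreal (P x)" "\<lambda>x. ennreal (N x)"] dens_eq by simp
  then show ?thesis
    by eventually_elim (auto simp: P_def N_def max_def split: if_splits)
qed


lemma cube_enlarge:
  fixes a b :: "real^'n::finite"
  assumes ab: "cbox a b \<noteq> {}" "cbox a b \<subseteq> \<Omega>" and O: "open \<Omega>"
  obtains r where "r > 0" "cbox (a - r *\<^sub>R 1) (b + r *\<^sub>R 1) \<subseteq> \<Omega>"
proof -
  obtain e where e: "e > 0" "(\<Union>x\<in>cbox a b. ball x e) \<subseteq> \<Omega>"
    using compact_subset_open_imp_ball_epsilon_subset[OF compact_cbox O ab(2)] by blast
  define r where "r = e / (2 * real CARD('n))"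
  have r: "r > 0" using e by (simp add: r_def)
  have le: "\<forall>j. a$j \<le> b$j" using ab(1) interval_ne_empty_cart(1) by blast
  have "y \<in> \<Omega>" if y: "y \<in> cbox (a - r *\<^sub>R 1) (b + r *\<^sub>R 1)" for y
  proof -
    define x where "x = (\<chi> j. max (a$j) (min (b$j) (y$j)))"
    have xin: "x \<in> cbox a b" using le by (auto simp: x_def mem_box_cart)
    have yj: "a$j - r \<le> y$j \<and> y$j \<le> b$j + r" for j using y by (auto simp: mem_box_cart)
    have cj: "\<bar>(y - x)$j\<bar> \<le> r" for j using yj[of j] le[rule_format, of j] r by (auto simp: x_def)
    have "(\<Sum>j\<in>UNIV. \<bar>(y - x)$j\<bar>) \<le> (\<Sum>j\<in>(UNIV::'n set). r)" by (intro sum_mono cj)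
    then have "norm (y - x) \<le> (\<Sum>j\<in>(UNIV::'n set). r)"
      using norm_le_l1_cart[of "y - x"] by linarith
    also have "\<dots> = real CARD('n) * r" by simp
    also have "\<dots> < e" using e by (simp add: r_def)
    finally have "y \<in> ball x e" by (simp add: dist_norm norm_minus_commute)
    then show ?thesis using e xin by blast
  qed
  then show ?thesis using that r by blast
qed

definition boxfun :: "real \<Rightarrow> real^'n::finite \<Rightarrow> real^'n \<Rightarrow> real^'n \<Rightarrow> real" where
  "boxfun m a b x = (\<Prod>j\<in>UNIV. sstep (m * x$j + (1 - m * a$j)) * sstep ((- m) * x$j + (m * b$j + 1)))"

lemma boxfun_C1: "\<exists>d. C1g (boxfun m a b) d"
proof -
  have "\<exists>d. C1g (\<lambda>x. \<Prod>j\<in>UNIV. sstep (m * x$j + (1 - m * a$j)) * sstep ((- m) * x$j + (m * b$j + 1))) d"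
  proof (rule C1g_prod)
    fix j
    show "\<exists>d. C1g (\<lambda>x. sstep (m * x$j + (1 - m * a$j)) * sstep ((- m) * x$j + (m * b$j + 1))) d"
      using C1g_mult[OF C1g_coord[OF sstep_deriv sstep'_cont, of m j "1 - m * a$j"]
                        C1g_coord[OF sstep_deriv sstep'_cont, of "- m" j "m * b$j + 1"]] by blast
  qed simp
  then show ?thesis by (simp add: boxfun_def[abs_def])
qed

lemma boxfun_bounds: "0 \<le> boxfun m a b x" "boxfun m a b x \<le> 1"
  unfolding boxfun_def using sstep_bounds
  by (auto intro!: prod_nonneg prod_le_1 mult_le_one)

lemma boxfun_nz:
  assumes "boxfun m a b x \<noteq> 0" "m > 0"
  shows "x \<in> cbox (a - (1/m) *\<^sub>R 1) (b + (1/m) *\<^sub>R 1)"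
proof -
  have "\<forall>j. sstep (m * x$j + (1 - m * a$j)) \<noteq> 0 \<and> sstep ((- m) * x$j + (m * b$j + 1)) \<noteq> 0"
    using assms(1) unfolding boxfun_def by auto
  then have "\<forall>j. m * x$j + (1 - m * a$j) > 0 \<and> (- m) * x$j + (m * b$j + 1) > 0"
    using sstep_0 by (metis not_le)
  then have "\<forall>j. a$j - 1/m \<le> x$j \<and> x$j \<le> b$j + 1/m"
    using assms(2) by (auto simp: field_simps) (meson less_imp_le)+
  then show ?thesis by (auto simp: mem_box_cart)
qed

lemma boxfun_in:
  assumes "x \<in> cbox a b" "m \<ge> 0"
  shows "boxfun m a b x = 1"
proof -
  have "\<forall>j. a$j \<le> x$j \<and> x$j \<le> b$j" using assms(1) by (auto simp: mem_box_cart)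
  then have "\<forall>j. m * x$j + (1 - m * a$j) \<ge> 1 \<and> (- m) * x$j + (m * b$j + 1) \<ge> 1"
    using assms(2) by (auto simp: algebra_simps intro: mult_left_mono)
  then show ?thesis unfolding boxfun_def by (simp add: sstep_1)
qed

lemma boxfun_out:
  assumes "x \<notin> cbox a b" "M \<ge> 0"
  shows "eventually (\<lambda>n. boxfun (real n + M) a b x = 0) sequentially"
proof -
  obtain j where j: "x$j < a$j \<or> b$j < x$j" using assms by (auto simp: mem_box_cart not_le)
  have "\<exists>N::nat. \<forall>n\<ge>N. sstep ((real n + M) * x$j + (1 - (real n + M) * a$j)) *
            sstep ((- (real n + M)) * x$j + ((real n + M) * b$j + 1)) = 0"
  proof (cases "x$j < a$j")
    case True
    obtain N :: nat where N: "1 / (a$j - x$j) \<le> real N" using real_arch_simple by blast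
    have "sstep ((real n + M) * x$j + (1 - (real n + M) * a$j)) = 0" if "n \<ge> N" for n
    proof -
      have "real n + M \<ge> 1 / (a$j - x$j)" using N that assms(2) by linarith
      then have "(real n + M) * (a$j - x$j) \<ge> 1" using True by (simp add: field_simps)
      then show ?thesis by (intro sstep_0) (simp add: algebra_simps)
    qed
    then show ?thesis by auto
  next
    case False
    then have T: "b$j < x$j" using j by simp
    obtain N :: nat where N: "1 / (x$j - b$j) \<le> real N" using real_arch_simple by blast
    have "sstep ((- (real n + M)) * x$j + ((real n + M) * b$j + 1)) = 0" if "n \<ge> N" for n
    proof -
      have "real n + M \<ge> 1 / (x$j - b$j)" using N that assms(2) by linarith
      then have "(real n + M) * (x$j - b$j) \<ge> 1" using T by (simp add: field_simps)
      then show ?thesis by (intro sstep_0) (simp add: algebra_simps)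
    qed
    then show ?thesis by auto
  qed
  then obtain N :: nat where N: "\<And>n. n \<ge> N \<Longrightarrow> sstep ((real n + M) * x$j + (1 - (real n + M) * a$j)) *
            sstep ((- (real n + M)) * x$j + ((real n + M) * b$j + 1)) = 0" by blast
  have "boxfun (real n + M) a b x = 0" if "n \<ge> N" for n
    unfolding boxfun_def by (rule prod_zero) (use N[OF that] in auto)
  then show ?thesis by (auto simp: eventually_sequentially)
qed


lemma box_test:
  fixes h :: "real^'n::finite \<Rightarrow> real"
  assumes O: "open \<Omega>"
    and hm: "h \<in> borel_measurable (lebesgue_on \<Omega>)"
    and hloc: "\<And>K. compact K \<Longrightarrow> K \<subseteq> \<Omega> \<Longrightarrow> integrable (lebesgue_on \<Omega>) (\<lambda>x. indicator K x * h x)"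
    and orth: "\<And>phi dphi. test_fun \<Omega> phi dphi \<Longrightarrow> (LINT x|lebesgue_on \<Omega>. phi x * h x) = 0"
    and ab: "cbox a b \<subseteq> \<Omega>"
  shows "(LINT x|lebesgue_on \<Omega>. indicator (cbox a b) x * h x) = 0"
proof (cases "cbox a b = {}")
  case True then show ?thesis by simp
next
  case False
  obtain r where r: "r > 0" "cbox (a - r *\<^sub>R 1) (b + r *\<^sub>R 1) \<subseteq> \<Omega>"
    using cube_enlarge[OF False ab O] by blast
  define A where "A = cbox (a - r *\<^sub>R 1) (b + r *\<^sub>R (1::real^'n))"
  obtain M :: nat where M: "1 / r \<le> real M" using real_arch_simple by blast
  define m where "m n = real n + real M + 1" for n
  have mpos: "m n > 0" for n by (simp add: m_def)
  have minv: "1 / m n \<le> r" for n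
  proof -
    have "1 / r < m n" using M by (simp add: m_def)
    then show ?thesis using r mpos[of n] by (simp add: field_simps)
  qed
  define psi where "psi n = boxfun (m n) a b" for n
  have Osets: "\<Omega> \<in> sets lebesgue" using O by simp
  have nzA: "x \<in> A" if "psi n x \<noteq> 0" for n x
  proof -
    have "x \<in> cbox (a - (1 / m n) *\<^sub>R 1) (b + (1 / m n) *\<^sub>R 1)"
      using boxfun_nz[OF that[unfolded psi_def] mpos] .
    then show ?thesis using minv[of n] unfolding A_def mem_box_cart
      by (auto simp del: divide_const_simps) (smt (verit))+
  qed
  have test: "\<exists>d. test_fun \<Omega> (psi n) d" for n
  proof -
    obtain d where d: "C1g (psi n) d" using boxfun_C1 unfolding psi_def by blast
    have sub: "{x. psi n x \<noteq> 0} \<subseteq> A" using nzA by blast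
    have cl: "closure {x. psi n x \<noteq> 0} \<subseteq> A"
      using closure_minimal[OF sub] by (simp add: A_def closed_cbox)
    have "bounded {x. psi n x \<noteq> 0}" using sub bounded_subset[OF bounded_cbox] by (simp add: A_def)
    then have "test_fun \<Omega> (psi n) d"
      using d cl r(2) by (auto simp: test_fun_def C1g_def A_def)
    then show ?thesis by blast
  qed
  have z: "(LINT x|lebesgue_on \<Omega>. psi n x * h x) = 0" for n using test[of n] orth by blast
  have pcont: "continuous_on UNIV (psi n)" for n
  proof -
    obtain d where d: "C1g (psi n) d" using boxfun_C1 unfolding psi_def by blast
    then show ?thesis unfolding C1g_def
      by (meson continuous_at_imp_continuous_on has_derivative_continuous)
  qed
  have pm: "psi n \<in> borel_measurable (lebesgue_on \<Omega>)" for n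
    using continuous_imp_measurable_on_sets_lebesgue[OF continuous_on_subset[OF pcont] Osets] by simp
  have sm: "(\<lambda>x. psi n x * h x) \<in> borel_measurable (lebesgue_on \<Omega>)" for n
    using pm hm by measurable
  have lim: "(\<lambda>n. psi n x * h x) \<longlonglongrightarrow> indicator (cbox a b) x * h x" for x
  proof (cases "x \<in> cbox a b")
    case True
    then have "psi n x = 1" for n using boxfun_in[OF True] mpos[of n] by (simp add: psi_def)
    then show ?thesis using True by simp
  next
    case False
    have "eventually (\<lambda>n. boxfun (real n + (real M + 1)) a b x = 0) sequentially"
      by (rule boxfun_out[OF False]) simp
    then have "eventually (\<lambda>n. psi n x * h x = 0) sequentially"
      by eventually_elim (simp add: psi_def m_def add.assoc)
    then have "(\<lambda>n. psi n x * h x) \<longlonglongrightarrow> 0" by (rule tendsto_eventually)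
    then show ?thesis using False by simp
  qed
  have fm: "(\<lambda>x. indicator (cbox a b) x * h x) \<in> borel_measurable (lebesgue_on \<Omega>)"
    by (rule borel_measurable_LIMSEQ_real[OF lim sm])
  have wi: "integrable (lebesgue_on \<Omega>) (\<lambda>x. indicator A x * \<bar>h x\<bar>)"
  proof -
    have "integrable (lebesgue_on \<Omega>) (\<lambda>x. indicator A x * h x)"
      by (rule hloc) (use r(2) in \<open>auto simp: A_def\<close>)
    then have "integrable (lebesgue_on \<Omega>) (\<lambda>x. \<bar>indicator A x * h x\<bar>)" by (rule integrable_abs)
    then show ?thesis by (simp add: abs_mult)
  qed
  have bnd: "norm (psi n x * h x) \<le> indicator A x * \<bar>h x\<bar>" for n x
  proof (cases "psi n x = 0")
    case True then show ?thesis by simp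
  next
    case False
    then have "x \<in> A" by (rule nzA)
    moreover have "\<bar>psi n x\<bar> \<le> 1" using boxfun_bounds[of "m n" a b x] by (simp add: psi_def)
    ultimately show ?thesis by (simp add: abs_mult mult_left_le_one_le)
  qed
  have "(\<lambda>n. LINT x|lebesgue_on \<Omega>. psi n x * h x) \<longlonglongrightarrow> (LINT x|lebesgue_on \<Omega>. indicator (cbox a b) x * h x)"
    by (rule integral_dominated_convergence[where s="\<lambda>n x. psi n x * h x", OF fm sm wi]) (use lim bnd in auto)
  then show ?thesis using z LIMSEQ_unique by (simp add: LIMSEQ_const_iff)
qed

lemma dubois:
  fixes h :: "real^'n::finite \<Rightarrow> real"
  assumes O: "open \<Omega>"
    and hm: "h \<in> borel_measurable (lebesgue_on \<Omega>)"
    and hloc: "\<And>K. compact K \<Longrightarrow> K \<subseteq> \<Omega> \<Longrightarrow> integrable (lebesgue_on \<Omega>) (\<lambda>x. indicator K x * h x)"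
    and orth: "\<And>phi dphi. test_fun \<Omega> phi dphi \<Longrightarrow> (LINT x|lebesgue_on \<Omega>. phi x * h x) = 0"
  shows "AE x in lebesgue_on \<Omega>. h x = 0"
proof -
  define S where "S = {x \<in> \<Omega>. h x \<noteq> 0}"
  have Osets: "\<Omega> \<in> sets lebesgue" using O by simp
  have hm': "(\<lambda>x. h x * indicator \<Omega> x) \<in> borel_measurable lebesgue"
    using hm by (subst (asm) borel_measurable_restrict_space_iff) (auto simp: Osets mult.commute)
  have "\<exists>U. openin (top_of_set S) U \<and> x0 \<in> U \<and> negligible U" if x0: "x0 \<in> S" for x0
  proof -
    have x0O: "x0 \<in> \<Omega>" using x0 by (simp add: S_def)
    have ne: "cbox x0 x0 \<noteq> {}" "cbox x0 x0 \<subseteq> \<Omega>" using x0O by auto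
    obtain r where r: "r > 0" "cbox (x0 - r *\<^sub>R 1) (x0 + r *\<^sub>R 1) \<subseteq> \<Omega>"
      using cube_enlarge[OF ne O] by blast
    define Q where "Q = cbox (x0 - r *\<^sub>R 1) (x0 + r *\<^sub>R (1::real^'n))"
    have QO: "Q \<subseteq> \<Omega>" using r by (simp add: Q_def)
    define H where "H x = indicator Q x * (h x * indicator \<Omega> x)" for x
    have Hm: "H \<in> borel_measurable lebesgue"
    proof -
      have "Q \<in> sets lebesgue" by (simp add: Q_def)
      then show ?thesis unfolding H_def using hm' by measurable
    qed
    have Hi: "integrable lebesgue H"
    proof -
      have "integrable (lebesgue_on \<Omega>) (\<lambda>x. indicator Q x * h x)"
        by (rule hloc) (use QO in \<open>auto simp: Q_def\<close>)
      then have "integrable lebesgue (\<lambda>x. indicator \<Omega> x *\<^sub>R (indicator Q x * h x))"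
        by (subst (asm) integrable_restrict_space) (auto simp: Osets)
      moreover have "(\<lambda>x. indicator \<Omega> x *\<^sub>R (indicator Q x * h x)) = H"
        by (auto simp: H_def fun_eq_iff)
      ultimately show ?thesis by simp
    qed
    obtain G where Gb: "G \<in> borel_measurable lborel" and HG: "AE x in lborel. H x = G x"
      using completion_ex_borel_measurable_real[OF Hm] by blast
    have Gm: "G \<in> borel_measurable lebesgue" using Gb by (rule measurable_completion)
    have HGc: "AE x in lebesgue. H x = G x" using HG by (rule AE_completion)
    have Gi: "integrable lborel G"
    proof -
      have "integrable lebesgue G" using Hi integrable_cong_AE[OF Hm Gm HGc] by simp
      then show ?thesis using integrable_completion[OF Gb] by simp
    qed
    have "(LINT x|lborel. indicator (cbox c d) x * G x) = 0" for c d
    proof -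
      have im: "(\<lambda>x. indicator (cbox c d) x * G x) \<in> borel_measurable lborel" using Gb by measurable
      have "(LINT x|lborel. indicator (cbox c d) x * G x) = (LINT x|lebesgue. indicator (cbox c d) x * G x)"
        by (rule integral_completion[symmetric, OF im])
      also have "\<dots> = (LINT x|lebesgue. indicator (cbox c d) x * H x)"
      proof (rule integral_cong_AE)
        have cs[measurable]: "cbox c d \<in> sets lebesgue" by simp
        show "(\<lambda>x. indicator (cbox c d) x * G x) \<in> borel_measurable lebesgue" using Gm by measurable
        show "(\<lambda>x. indicator (cbox c d) x * H x) \<in> borel_measurable lebesgue" using Hm by measurable
        show "AE x in lebesgue. indicator (cbox c d) x * G x = indicator (cbox c d) x * H x"
          using HGc by eventually_elim simp
      qed
      also have "\<dots> = (LINT x|lebesgue. indicator \<Omega> x *\<^sub>R (indicator (cbox c d \<inter> Q) x * h x))"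
        by (rule Bochner_Integration.integral_cong) (auto simp: H_def indicator_def)
      also have "\<dots> = (LINT x|lebesgue_on \<Omega>. indicator (cbox c d \<inter> Q) x * h x)"
        by (rule integral_restrict_space[symmetric]) (simp add: Osets)
      also have "\<dots> = 0"
      proof -
        obtain c' d' where cd: "cbox c d \<inter> Q = cbox c' d'"
          unfolding Q_def Int_interval_cart interval_cbox_cart by blast
        have "cbox c' d' \<subseteq> \<Omega>" using QO cd by blast
        then show ?thesis unfolding cd
        proof (rule box_test[OF O hm, rotated -1])
          show "\<And>K. compact K \<Longrightarrow> K \<subseteq> \<Omega> \<Longrightarrow> integrable (lebesgue_on \<Omega>) (\<lambda>x. indicator K x * h x)"
            by (rule hloc)
          show "\<And>phi dphi. test_fun \<Omega> phi dphi \<Longrightarrow> (LINT x|lebesgue_on \<Omega>. phi x * h x) = 0"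
            by (rule orth)
        qed
      qed
      finally show ?thesis .
    qed
    then have "AE x in lborel. G x = 0" by (rule cubes_zero_ae[OF Gi])
    then have "AE x in lborel. H x = 0" using HG by eventually_elim simp
    then have "AE x in lebesgue. H x = 0" by (rule AE_completion)
    then obtain N where N: "{x \<in> space lebesgue. \<not> H x = 0} \<subseteq> N" "emeasure lebesgue N = 0" "N \<in> sets lebesgue"
      by (rule AE_E)
    have negN: "negligible N" using N by (simp add: negligible_iff_null_sets null_sets_def)
    define U where "U = S \<inter> box (x0 - r *\<^sub>R 1) (x0 + r *\<^sub>R (1::real^'n))"
    have "U \<subseteq> N"
    proof
      fix x assume "x \<in> U"
      then have "x \<in> Q" "x \<in> \<Omega>" "h x \<noteq> 0" using box_subset_cbox
        by (auto simp: U_def S_def Q_def)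
      then have "H x \<noteq> 0" by (simp add: H_def)
      then show "x \<in> N" using N(1) by auto
    qed
    then have "negligible U" using negN negligible_subset by blast
    moreover have "openin (top_of_set S) U" unfolding U_def by (rule openin_open_Int) (rule open_box)
    moreover have "x0 \<in> U" using x0 r(1) by (auto simp: U_def mem_box_cart)
    ultimately show ?thesis by blast
  qed
  then have "negligible S" using locally_negligible_alt by blast
  then have "S \<in> null_sets lebesgue" by (simp add: negligible_iff_null_sets)
  then have "AE x in lebesgue. x \<notin> S" by (rule AE_not_in)
  then have "AE x in lebesgue. x \<in> \<Omega> \<longrightarrow> h x = 0" by eventually_elim (auto simp: S_def)
  then show ?thesis by (subst AE_restrict_space_iff) (auto simp: Osets)
qed


lemma posdef_invertible:
  fixes A :: "real^'n::finite^'n"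
  assumes "\<forall>u. u \<noteq> 0 \<longrightarrow> u \<bullet> (A *v u) > 0"
  shows "invertible A"
proof -
  have "inj ((*v) A)"
  proof (rule injI)
    fix x y assume "A *v x = A *v y"
    then have "A *v (x - y) = 0" by (simp add: matrix_vector_mult_diff_distrib)
    then have "\<not> (x - y \<noteq> 0)" using assms[rule_format, of "x - y"] by auto
    then show "x = y" by simp
  qed
  then show ?thesis by (simp add: invertible_left_inverse matrix_left_invertible_injective)
qed

lemma matrix_inv_props:
  fixes A :: "real^'n::finite^'n"
  assumes "invertible A"
  shows "A ** matrix_inv A = mat 1" "matrix_inv A ** A = mat 1"
proof -
  have "\<exists>A'. A ** A' = mat 1 \<and> A' ** A = mat 1" using assms by (simp add: invertible_def)
  then have "A ** matrix_inv A = mat 1 \<and> matrix_inv A ** A = mat 1"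
    unfolding matrix_inv_def by (rule someI_ex)
  then show "A ** matrix_inv A = mat 1" "matrix_inv A ** A = mat 1" by auto
qed

lemma matrix_inv_mv:
  fixes A :: "real^'n::finite^'n"
  assumes "invertible A"
  shows "A *v (matrix_inv A *v y) = y" "matrix_inv A *v (A *v y) = y"
  using matrix_inv_props[OF assms] by (simp_all add: matrix_vector_mul_assoc)

lemma matrix_inv_sym:
  fixes A :: "real^'n::finite^'n"
  assumes "invertible A" "transpose A = A"
  shows "transpose (matrix_inv A) = matrix_inv A"
proof -
  note P = matrix_inv_props[OF assms(1)]
  have "transpose (matrix_inv A) ** A = mat 1"
    using P(1) assms(2) by (metis matrix_transpose_mul transpose_mat)
  then have "transpose (matrix_inv A) = transpose (matrix_inv A) ** (A ** matrix_inv A)"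
    using P(1) by simp
  also have "\<dots> = matrix_inv A" using \<open>transpose (matrix_inv A) ** A = mat 1\<close>
    by (simp add: matrix_mul_assoc)
  finally show ?thesis .
qed

lemma sym_inner:
  fixes B :: "real^'n::finite^'n"
  assumes "transpose B = B"
  shows "(B *v w) \<bullet> z = w \<bullet> (B *v z)"
proof -
  have "B *v w = w v* B" using vector_transpose_matrix[of w B] assms by simp
  then show ?thesis by (simp add: dot_lmul_matrix)
qed

lemma mv_expand:
  fixes B :: "real^'n::finite^'m::finite"
  shows "B *v y = (\<Sum>j\<in>UNIV. y $ j *\<^sub>R (B *v axis j 1))"
  by (simp add: vec_eq_iff matrix_vector_mult_def sum_component axis_def mult.commute
      if_distrib cong: if_cong)

lemma det_continuous:
  fixes A :: "'a::topological_space \<Rightarrow> real^'n::finite^'n"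
  assumes "\<And>i j. continuous_on S (\<lambda>x. A x $ i $ j)"
  shows "continuous_on S (\<lambda>x. det (A x))"
  unfolding det_def using assms
  by (intro continuous_on_sum continuous_on_mult continuous_on_prod continuous_on_const) auto

lemma matrix_inv_continuous:
  fixes A :: "'a::topological_space \<Rightarrow> real^'n::finite^'n"
  assumes c: "continuous_on S A" and inv: "\<And>x. x \<in> S \<Longrightarrow> invertible (A x)"
  shows "continuous_on S (\<lambda>x. matrix_inv (A x) *v b)"
proof -
  have ent: "continuous_on S (\<lambda>x. A x $ i $ j)" for i j
    using c by (intro continuous_on_component)
  have d0: "det (A x) \<noteq> 0" if "x \<in> S" for x using inv[OF that] invertible_det_nz by blast
  have eq: "matrix_inv (A x) *v b = (\<chi> k. det(\<chi> i j. if j=k then b$i else A x$i$j) / det (A x))"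
    if "x \<in> S" for x
    using cramer[OF d0[OF that], of "matrix_inv (A x) *v b" b] matrix_inv_mv(1)[OF inv[OF that]] by simp
  have "continuous_on S (\<lambda>x. \<chi> k. det(\<chi> i j. if j=k then b$i else A x$i$j) / det (A x))"
  proof (intro continuous_on_vec_lambda continuous_on_divide det_continuous)
    fix k i j
    show "continuous_on S (\<lambda>x. (\<chi> i j. if j=k then b$i else A x$i$j) $ i $ j)"
      using ent by (cases "j = k") (simp_all add: continuous_on_const)
  qed (use ent d0 in auto)
  then show ?thesis by (subst continuous_on_cong[OF refl eq]) auto
qed


lemma const_int_on:
  fixes \<Omega> :: "(real^'n::finite) set"
  assumes "open \<Omega>" "bounded \<Omega>"
  shows "integrable (lebesgue_on \<Omega>) (\<lambda>x. c::real)"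
proof -
  have "\<Omega> \<in> lmeasurable" using assms by (intro bounded_set_imp_lmeasurable) auto
  then interpret finite_measure "lebesgue_on \<Omega>" by (rule finite_measure_lebesgue_on)
  show ?thesis by simp
qed

lemma abs_le_1_sq: "\<bar>a::real\<bar> \<le> 1 + a^2"
proof (cases "\<bar>a\<bar> \<le> 1")
  case True then show ?thesis by (simp add: add_increasing2)
next
  case False
  then have "\<bar>a\<bar> \<le> \<bar>a\<bar> * \<bar>a\<bar>" using mult_right_mono[of 1 "\<bar>a\<bar>" "\<bar>a\<bar>"] by simp
  also have "\<dots> = a^2" by (simp add: power2_eq_square abs_mult_self_eq)
  finally show ?thesis by simp
qed

lemma L2_int:
  fixes \<Omega> :: "(real^'n::finite) set"
  assumes "open \<Omega>" "bounded \<Omega>" "L2 \<Omega> u"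
  shows "integrable (lebesgue_on \<Omega>) u"
proof (rule Bochner_Integration.integrable_bound[of _ "\<lambda>x. 1 + (u x)^2"])
  show "integrable (lebesgue_on \<Omega>) (\<lambda>x. 1 + (u x)^2)"
    using const_int_on[OF assms(1,2)] assms(3) by (auto simp: L2_def)
  show "u \<in> borel_measurable (lebesgue_on \<Omega>)" using assms(3) by (simp add: L2_def)
  show "AE x in lebesgue_on \<Omega>. norm (u x) \<le> norm (1 + (u x)^2)"
    using abs_le_1_sq by (auto intro!: always_eventually)
qed

lemma L2v_int:
  fixes \<Omega> :: "(real^'n::finite) set"
  assumes "open \<Omega>" "bounded \<Omega>" "L2v \<Omega> w"
  shows "integrable (lebesgue_on \<Omega>) w"
proof (rule Bochner_Integration.integrable_bound[of _ "\<lambda>x. 1 + (norm (w x))^2"])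
  show "integrable (lebesgue_on \<Omega>) (\<lambda>x. 1 + (norm (w x))^2)"
    using const_int_on[OF assms(1,2)] assms(3) by (auto simp: L2v_def)
  show "w \<in> borel_measurable (lebesgue_on \<Omega>)" using assms(3) by (simp add: L2v_def)
  show "AE x in lebesgue_on \<Omega>. norm (w x) \<le> norm (1 + (norm (w x))^2)"
    using abs_le_1_sq[of "norm (w x)" for x] by (auto intro!: always_eventually)
qed

lemma int_scale_bdd1:
  fixes f :: "'a \<Rightarrow> real" and F :: "'a \<Rightarrow> 'b::{banach, second_countable_topology}"
  assumes "integrable M f" "F \<in> borel_measurable M" "\<And>x. norm (F x) \<le> B"
  shows "integrable M (\<lambda>x. f x *\<^sub>R F x)"
proof (rule Bochner_Integration.integrable_bound[of _ "\<lambda>x. B * f x"])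
  show "integrable M (\<lambda>x. B * f x)" using assms(1) by simp
  show "(\<lambda>x. f x *\<^sub>R F x) \<in> borel_measurable M"
    using assms(1,2) borel_measurable_integrable by measurable
  have B0: "0 \<le> B" using assms(3) norm_ge_zero order_trans by blast
  show "AE x in M. norm (f x *\<^sub>R F x) \<le> norm (B * f x)"
  proof (intro always_eventually allI)
    fix x
    have "\<bar>f x\<bar> * norm (F x) \<le> \<bar>f x\<bar> * B" by (rule mult_left_mono[OF assms(3)]) simp
    then show "norm (f x *\<^sub>R F x) \<le> norm (B * f x)" using B0 by (simp add: abs_mult mult.commute)
  qed
qed

lemma int_scale_bdd2:
  fixes f :: "'a \<Rightarrow> real" and F :: "'a \<Rightarrow> 'b::{banach, second_countable_topology}"
  assumes "integrable M F" "f \<in> borel_measurable M" "\<And>x. \<bar>f x\<bar> \<le> B"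
  shows "integrable M (\<lambda>x. f x *\<^sub>R F x)"
proof (rule Bochner_Integration.integrable_bound[of _ "\<lambda>x. B *\<^sub>R F x"])
  show "integrable M (\<lambda>x. B *\<^sub>R F x)" using assms(1) by simp
  show "(\<lambda>x. f x *\<^sub>R F x) \<in> borel_measurable M"
    using assms(1,2) borel_measurable_integrable by measurable
  have B0: "0 \<le> B" using assms(3) abs_ge_zero order_trans by blast
  show "AE x in M. norm (f x *\<^sub>R F x) \<le> norm (B *\<^sub>R F x)"
    using assms(3) B0 by (auto intro!: always_eventually mult_right_mono)
qed

lemma cont_meas_on:
  fixes g :: "real^'n::finite \<Rightarrow> 'b::euclidean_space"
  assumes "open \<Omega>" "continuous_on \<Omega> g"
  shows "g \<in> borel_measurable (lebesgue_on \<Omega>)"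
  using continuous_imp_measurable_on_sets_lebesgue[OF assms(2)] assms(1) by simp

lemma test_bdd:
  assumes "test_fun \<Omega> phi dphi"
  shows "\<exists>B. \<forall>x. \<bar>phi x\<bar> \<le> B \<and> norm (dphi x) \<le> B"
proof -
  note T = test_fun_facts[OF assms]
  have "compact (phi ` supp phi)" "compact (dphi ` supp phi)"
    using T(1) continuous_on_subset[OF T(5)] continuous_on_subset[OF T(6)]
    by (auto intro!: compact_continuous_image)
  then have "bounded (phi ` supp phi)" "bounded (dphi ` supp phi)" by (auto intro: compact_imp_bounded)
  then obtain B1 B2 where B1: "\<And>x. x \<in> supp phi \<Longrightarrow> norm (phi x) \<le> B1"
    and B2: "\<And>x. x \<in> supp phi \<Longrightarrow> norm (dphi x) \<le> B2"
    unfolding bounded_iff by auto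
  define B where "B = max 0 (max B1 B2)"
  have "\<bar>phi x\<bar> \<le> B \<and> norm (dphi x) \<le> B" for x
  proof (cases "x \<in> supp phi")
    case True
    then have "\<bar>phi x\<bar> \<le> B1" "norm (dphi x) \<le> B2" using B1 B2 by auto
    then show ?thesis unfolding B_def by linarith
  next
    case False then show ?thesis using T(3,4) by (simp add: B_def)
  qed
  then show ?thesis by blast
qed

lemma test_meas:
  assumes "test_fun \<Omega> phi dphi" "open \<Omega>"
  shows "phi \<in> borel_measurable (lebesgue_on \<Omega>)" "dphi \<in> borel_measurable (lebesgue_on \<Omega>)"
proof -
  note T = test_fun_facts[OF assms(1)]
  show "phi \<in> borel_measurable (lebesgue_on \<Omega>)"
    by (rule cont_meas_on[OF assms(2) continuous_on_subset[OF T(5)]]) simp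
  show "dphi \<in> borel_measurable (lebesgue_on \<Omega>)"
    by (rule cont_meas_on[OF assms(2) continuous_on_subset[OF T(6)]]) simp
qed


lemma compact_sets_on:
  fixes K :: "(real^'n::finite) set"
  assumes "open \<Omega>" "compact K" "K \<subseteq> \<Omega>"
  shows "K \<in> sets (lebesgue_on \<Omega>)"
proof -
  have "closed K" using compact_imp_closed assms(2) by blast
  then have "K \<in> sets borel" by (rule borel_closed)
  then have "K \<in> sets lebesgue" by (simp add: sets_completionI_sets)
  then show ?thesis using assms(1,3) by (subst sets_restrict_space_iff) auto
qed

lemma ind_meas_on:
  fixes K :: "(real^'n::finite) set"
  assumes "open \<Omega>" "compact K" "K \<subseteq> \<Omega>"
  shows "indicator K \<in> borel_measurable (lebesgue_on \<Omega>)"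
  using compact_sets_on[OF assms] by simp

lemma nth_meas:
  fixes F :: "'a \<Rightarrow> real^'n::finite"
  assumes "F \<in> borel_measurable M"
  shows "(\<lambda>x. F x $ k) \<in> borel_measurable M"
  using measurable_compose[OF assms borel_measurable_nth] .

lemma ae_eq_scalar:
  fixes h1 h2 :: "real^'n::finite \<Rightarrow> real"
  assumes O: "open \<Omega>" "bounded \<Omega>"
    and i1: "integrable (lebesgue_on \<Omega>) h1" and m2: "h2 \<in> borel_measurable (lebesgue_on \<Omega>)"
    and l2: "\<And>K. compact K \<Longrightarrow> K \<subseteq> \<Omega> \<Longrightarrow> integrable (lebesgue_on \<Omega>) (\<lambda>x. indicator K x * h2 x)"
    and eq: "\<And>phi dphi. test_fun \<Omega> phi dphi \<Longrightarrow>
               (LINT x|lebesgue_on \<Omega>. phi x * h1 x) = (LINT x|lebesgue_on \<Omega>. phi x * h2 x)"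
  shows "AE x in lebesgue_on \<Omega>. h1 x = h2 x"
proof -
  have m1: "h1 \<in> borel_measurable (lebesgue_on \<Omega>)" using i1 by (rule borel_measurable_integrable)
  have "AE x in lebesgue_on \<Omega>. h1 x - h2 x = 0"
  proof (rule dubois[OF O(1)])
    show "(\<lambda>x. h1 x - h2 x) \<in> borel_measurable (lebesgue_on \<Omega>)" using m1 m2 by measurable
  next
    fix K :: "(real^'n) set" assume K: "compact K" "K \<subseteq> \<Omega>"
    have a: "integrable (lebesgue_on \<Omega>) (\<lambda>x. indicator K x * h1 x)"
      using int_scale_bdd2[OF i1 ind_meas_on[OF O(1) K], of 1] by (simp add: indicator_def)
    show "integrable (lebesgue_on \<Omega>) (\<lambda>x. indicator K x * (h1 x - h2 x))"
      using Bochner_Integration.integrable_diff[OF a l2[OF K]] by (simp add: algebra_simps)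
  next
    fix phi dphi assume t: "test_fun \<Omega> phi dphi"
    note T = test_fun_facts[OF t]
    obtain B where B: "\<And>x. \<bar>phi x\<bar> \<le> B" using test_bdd[OF t] by blast
    have pm: "phi \<in> borel_measurable (lebesgue_on \<Omega>)" using test_meas[OF t O(1)] by simp
    have a: "integrable (lebesgue_on \<Omega>) (\<lambda>x. phi x * h1 x)"
      using int_scale_bdd2[OF i1 pm B] by simp
    have b0: "integrable (lebesgue_on \<Omega>) (\<lambda>x. indicator (supp phi) x * h2 x)"
      using l2 T(1,2) by blast
    have b1: "integrable (lebesgue_on \<Omega>) (\<lambda>x. phi x * (indicator (supp phi) x * h2 x))"
      using int_scale_bdd2[OF b0 pm B] by simp
    have b: "integrable (lebesgue_on \<Omega>) (\<lambda>x. phi x * h2 x)"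
    proof -
      have "(\<lambda>x. phi x * (indicator (supp phi) x * h2 x)) = (\<lambda>x. phi x * h2 x)"
        using T(3) by (auto simp: fun_eq_iff indicator_def)
      then show ?thesis using b1 by simp
    qed
    show "(LINT x|lebesgue_on \<Omega>. phi x * (h1 x - h2 x)) = 0"
      using Bochner_Integration.integral_diff[OF a b] eq[OF t] by (simp add: algebra_simps)
  qed
  then show ?thesis by eventually_elim simp
qed

lemma vec_ae:
  fixes A B :: "'a \<Rightarrow> real^'n::finite"
  assumes "\<And>k. AE x in M. A x $ k = B x $ k"
  shows "AE x in M. A x = B x"
proof -
  have "AE x in M. \<forall>k\<in>UNIV. A x $ k = B x $ k" by (rule AE_finite_allI) (use assms in auto)
  then show ?thesis by eventually_elim (simp add: vec_eq_iff)
qed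

lemma weak_grad_comp:
  fixes u :: "real^'n::finite \<Rightarrow> real"
  assumes O: "open \<Omega>" "bounded \<Omega>" and wg: "is_weak_grad \<Omega> u g" and u: "L2 \<Omega> u"
    and t: "test_fun \<Omega> phi dphi"
  shows "(LINT x|lebesgue_on \<Omega>. u x * dphi x $ k) = - (LINT x|lebesgue_on \<Omega>. phi x * g x $ k)"
proof -
  have iu: "integrable (lebesgue_on \<Omega>) u" by (rule L2_int[OF O u])
  have ig: "integrable (lebesgue_on \<Omega>) g" using wg L2v_int[OF O] by (auto simp: is_weak_grad_def)
  obtain B where B: "\<And>x. \<bar>phi x\<bar> \<le> B \<and> norm (dphi x) \<le> B" using test_bdd[OF t] by blast
  have pm: "phi \<in> borel_measurable (lebesgue_on \<Omega>)" "dphi \<in> borel_measurable (lebesgue_on \<Omega>)"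
    using test_meas[OF t O(1)] by auto
  have i1: "integrable (lebesgue_on \<Omega>) (\<lambda>x. u x *\<^sub>R dphi x)"
    using int_scale_bdd1[OF iu pm(2)] B by blast
  have i2: "integrable (lebesgue_on \<Omega>) (\<lambda>x. phi x *\<^sub>R g x)"
    using int_scale_bdd2[OF ig pm(1)] B by blast
  have e: "(LINT x|lebesgue_on \<Omega>. u x *\<^sub>R dphi x) = - (LINT x|lebesgue_on \<Omega>. phi x *\<^sub>R g x)"
    using wg t by (auto simp: is_weak_grad_def)
  have "(LINT x|lebesgue_on \<Omega>. u x * dphi x $ k) = (LINT x|lebesgue_on \<Omega>. u x *\<^sub>R dphi x) $ k"
    using integral_bounded_linear[OF bounded_linear_vec_nth i1, of k] by simp
  also have "\<dots> = - ((LINT x|lebesgue_on \<Omega>. phi x *\<^sub>R g x) $ k)" using e by simp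
  also have "(LINT x|lebesgue_on \<Omega>. phi x *\<^sub>R g x) $ k = (LINT x|lebesgue_on \<Omega>. phi x * g x $ k)"
    using integral_bounded_linear[OF bounded_linear_vec_nth i2, of k] by simp
  finally show ?thesis .
qed

lemma test_L2:
  assumes O: "open \<Omega>" "bounded \<Omega>" and t: "test_fun \<Omega> phi dphi"
  shows "L2 \<Omega> phi" "L2v \<Omega> dphi" "L2 \<Omega> (\<lambda>x. dphi x $ k)"
proof -
  obtain B where B: "\<And>x. \<bar>phi x\<bar> \<le> B \<and> norm (dphi x) \<le> B" using test_bdd[OF t] by blast
  have pm: "phi \<in> borel_measurable (lebesgue_on \<Omega>)" "dphi \<in> borel_measurable (lebesgue_on \<Omega>)"
    using test_meas[OF t O(1)] by auto
  have c: "integrable (lebesgue_on \<Omega>) (\<lambda>x. B^2)" by (rule const_int_on[OF O])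
  have B0: "0 \<le> B" using B[of undefined] by linarith
  show "L2 \<Omega> phi" unfolding L2_def
  proof
    show "integrable (lebesgue_on \<Omega>) (\<lambda>x. (phi x)^2)"
    proof (rule Bochner_Integration.integrable_bound[OF c])
      show "(\<lambda>x. (phi x)^2) \<in> borel_measurable (lebesgue_on \<Omega>)" using pm by measurable
      have "(phi x)^2 \<le> B^2" for x using B[of x] B0 abs_le_square_iff[of "phi x" B] by simp
      then show "AE x in lebesgue_on \<Omega>. norm ((phi x)^2) \<le> norm (B^2)" by auto
    qed
  qed (use pm in auto)
  show "L2v \<Omega> dphi" unfolding L2v_def
  proof
    show "integrable (lebesgue_on \<Omega>) (\<lambda>x. (norm (dphi x))^2)"
    proof (rule Bochner_Integration.integrable_bound[OF c])
      show "(\<lambda>x. (norm (dphi x))^2) \<in> borel_measurable (lebesgue_on \<Omega>)" using pm by measurable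
      show "AE x in lebesgue_on \<Omega>. norm ((norm (dphi x))^2) \<le> norm (B^2)"
        using B B0 by (auto intro!: always_eventually power_mono)
    qed
  qed (use pm in auto)
  show "L2 \<Omega> (\<lambda>x. dphi x $ k)" unfolding L2_def
  proof
    show "integrable (lebesgue_on \<Omega>) (\<lambda>x. (dphi x $ k)^2)"
    proof (rule Bochner_Integration.integrable_bound[OF c])
      show "(\<lambda>x. (dphi x $ k)^2) \<in> borel_measurable (lebesgue_on \<Omega>)" using nth_meas[OF pm(2)] by measurable
      have "\<bar>dphi x $ k\<bar> \<le> B" for x using B[of x] component_le_norm_cart[of "dphi x" k] by linarith
      then have "(dphi x $ k)^2 \<le> B^2" for x using B0 abs_le_square_iff[of "dphi x $ k" B] by simp
      then show "AE x in lebesgue_on \<Omega>. norm ((dphi x $ k)^2) \<le> norm (B^2)" by auto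
    qed
  qed (use nth_meas[OF pm(2)] in auto)
qed

lemma test_weak_grad:
  fixes \<Omega> :: "(real^'n::finite) set"
  assumes O: "open \<Omega>" "bounded \<Omega>" and t: "test_fun \<Omega> phi dphi"
  shows "is_weak_grad \<Omega> phi dphi" "H1 \<Omega> phi"
proof -
  note T = test_fun_facts[OF t]
  have g: "is_weak_grad \<Omega> phi dphi" unfolding is_weak_grad_def
  proof (intro conjI allI impI)
    show "L2v \<Omega> dphi" by (rule test_L2(2)[OF O t])
    fix psi dpsi assume s: "test_fun \<Omega> psi dpsi"
    obtain B1 where B1: "\<And>x. \<bar>phi x\<bar> \<le> B1 \<and> norm (dphi x) \<le> B1" using test_bdd[OF t] by blast
    obtain B2 where B2: "\<And>x. \<bar>psi x\<bar> \<le> B2 \<and> norm (dpsi x) \<le> B2" using test_bdd[OF s] by blast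
    have iphi: "integrable (lebesgue_on \<Omega>) phi" using L2_int[OF O test_L2(1)[OF O t]] .
    have ipsi: "integrable (lebesgue_on \<Omega>) psi" using L2_int[OF O test_L2(1)[OF O s]] .
    have m: "dpsi \<in> borel_measurable (lebesgue_on \<Omega>)" "dphi \<in> borel_measurable (lebesgue_on \<Omega>)"
      using test_meas[OF s O(1)] test_meas[OF t O(1)] by auto
    have i1: "integrable (lebesgue_on \<Omega>) (\<lambda>x. phi x *\<^sub>R dpsi x)"
      using int_scale_bdd1[OF iphi m(1)] B2 by blast
    have i2: "integrable (lebesgue_on \<Omega>) (\<lambda>x. psi x *\<^sub>R dphi x)"
      using int_scale_bdd1[OF ipsi m(2)] B1 by blast
    have cd: "\<And>x. x \<in> \<Omega> \<Longrightarrow> (phi has_derivative (\<lambda>h. dphi x \<bullet> h)) (at x)" using T(7) by blast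
    have gc: "continuous_on \<Omega> dphi" using T(6) continuous_on_subset by blast
    show "(LINT x|lebesgue_on \<Omega>. phi x *\<^sub>R dpsi x) = - (LINT x|lebesgue_on \<Omega>. psi x *\<^sub>R dphi x)"
    proof (subst vec_eq_iff, intro allI)
      fix k
      have "(LINT x|lebesgue_on \<Omega>. phi x *\<^sub>R dpsi x) $ k = (LINT x|lebesgue_on \<Omega>. phi x * dpsi x $ k)"
        using integral_bounded_linear[OF bounded_linear_vec_nth i1, of k] by simp
      also have "\<dots> = - (LINT x|lebesgue_on \<Omega>. psi x * dphi x $ k)"
        by (rule ibp_prod(3)[OF O(1) cd gc s])
      also have "(LINT x|lebesgue_on \<Omega>. psi x * dphi x $ k) = (LINT x|lebesgue_on \<Omega>. psi x *\<^sub>R dphi x) $ k"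
        using integral_bounded_linear[OF bounded_linear_vec_nth i2, of k] by simp
      finally show "(LINT x|lebesgue_on \<Omega>. phi x *\<^sub>R dpsi x) $ k = (- (LINT x|lebesgue_on \<Omega>. psi x *\<^sub>R dphi x)) $ k"
        by simp
    qed
  qed
  show "is_weak_grad \<Omega> phi dphi" by (rule g)
  show "H1 \<Omega> phi" using g test_L2(1)[OF O t] by (auto simp: H1_def)
qed


lemma wgrad_some: "H1 \<Omega> u \<Longrightarrow> is_weak_grad \<Omega> u (wgrad \<Omega> u)"
  unfolding H1_def wgrad_def by (metis someI)

lemma wdiv_some: "Hdiv \<Omega> w \<Longrightarrow> is_weak_div \<Omega> w (wdiv \<Omega> w)"
  unfolding Hdiv_def wdiv_def by (metis someI)

lemma loc_int_of_int:
  fixes h :: "real^'n::finite \<Rightarrow> real"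
  assumes "open \<Omega>" "integrable (lebesgue_on \<Omega>) h" "compact K" "K \<subseteq> \<Omega>"
  shows "integrable (lebesgue_on \<Omega>) (\<lambda>x. indicator K x * h x)"
  using int_scale_bdd2[OF assms(2) ind_meas_on[OF assms(1,3,4)], of 1] by (simp add: indicator_def)

lemma loc_int_cont:
  fixes h :: "real^'n::finite \<Rightarrow> real"
  assumes "open \<Omega>" "continuous_on \<Omega> h" "compact K" "K \<subseteq> \<Omega>"
  shows "integrable (lebesgue_on \<Omega>) (\<lambda>x. indicator K x * h x)"
proof (rule restrict_compact_int(1)[OF _ assms(3,4)])
  show "\<Omega> \<in> sets lebesgue" using assms(1) by simp
  have "continuous_on K h" using assms(2,4) continuous_on_subset by blast
  then show "continuous_on K (\<lambda>x. indicator K x * h x)"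
    by (rule continuous_on_eq) (auto simp: indicator_def)
qed auto

lemma C1_weak_grad_ae:
  fixes c :: "real^'n::finite \<Rightarrow> real"
  assumes O: "open \<Omega>" "bounded \<Omega>"
    and cder: "\<And>x. x \<in> \<Omega> \<Longrightarrow> (c has_derivative (\<lambda>h. Gc x \<bullet> h)) (at x)"
    and gcont: "continuous_on \<Omega> Gc" and wg: "is_weak_grad \<Omega> c g" and u: "L2 \<Omega> c"
  shows "AE x in lebesgue_on \<Omega>. g x = Gc x"
proof (rule vec_ae)
  fix k
  have ig: "integrable (lebesgue_on \<Omega>) g" using wg L2v_int[OF O] by (auto simp: is_weak_grad_def)
  have igk: "integrable (lebesgue_on \<Omega>) (\<lambda>x. g x $ k)"
    using integrable_bounded_linear[OF bounded_linear_vec_nth ig] .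
  have gck: "continuous_on \<Omega> (\<lambda>x. Gc x $ k)" using gcont by (rule continuous_on_component)
  show "AE x in lebesgue_on \<Omega>. g x $ k = Gc x $ k"
  proof (rule ae_eq_scalar[OF O igk])
    show "(\<lambda>x. Gc x $ k) \<in> borel_measurable (lebesgue_on \<Omega>)" by (rule cont_meas_on[OF O(1) gck])
    show "\<And>K. compact K \<Longrightarrow> K \<subseteq> \<Omega> \<Longrightarrow> integrable (lebesgue_on \<Omega>) (\<lambda>x. indicator K x * Gc x $ k)"
      by (rule loc_int_cont[OF O(1) gck])
    fix phi dphi assume t: "test_fun \<Omega> phi dphi"
    have "(LINT x|lebesgue_on \<Omega>. c x * dphi x $ k) = - (LINT x|lebesgue_on \<Omega>. phi x * g x $ k)"
      by (rule weak_grad_comp[OF O wg u t])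
    moreover have "(LINT x|lebesgue_on \<Omega>. c x * dphi x $ k) = - (LINT x|lebesgue_on \<Omega>. phi x * Gc x $ k)"
      by (rule ibp_prod(3)[OF O(1) cder gcont t])
    ultimately show "(LINT x|lebesgue_on \<Omega>. phi x * g x $ k) = (LINT x|lebesgue_on \<Omega>. phi x * Gc x $ k)"
      by simp
  qed
qed

lemma zero_weak_grad_ae:
  fixes \<Omega> :: "(real^'n::finite) set"
  assumes O: "open \<Omega>" "bounded \<Omega>" and wg: "is_weak_grad \<Omega> (\<lambda>x. 0) g"
  shows "AE x in lebesgue_on \<Omega>. g x = 0"
proof -
  have "AE x in lebesgue_on \<Omega>. g x = (\<lambda>x. 0) x"
    by (rule C1_weak_grad_ae[OF O _ _ wg]) (auto simp: L2_def)
  then show ?thesis by simp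
qed

lemma axis_div:
  fixes \<Omega> :: "(real^'n::finite) set"
  assumes O: "open \<Omega>" "bounded \<Omega>" and t: "test_fun \<Omega> psi dpsi"
  shows "Hdiv \<Omega> (\<lambda>x. psi x *\<^sub>R axis k 1)"
    "AE x in lebesgue_on \<Omega>. wdiv \<Omega> (\<lambda>x. psi x *\<^sub>R axis k 1) x = dpsi x $ k"
proof -
  note T = test_fun_facts[OF t]
  define w where "w x = psi x *\<^sub>R axis k (1::real)" for x
  have cd: "\<And>x. x \<in> \<Omega> \<Longrightarrow> (psi has_derivative (\<lambda>h. dpsi x \<bullet> h)) (at x)" using T(7) by blast
  have gc: "continuous_on \<Omega> dpsi" using T(6) continuous_on_subset by blast
  have wd: "is_weak_div \<Omega> w (\<lambda>x. dpsi x $ k)" unfolding is_weak_div_def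
  proof (intro conjI allI impI)
    show "L2 \<Omega> (\<lambda>x. dpsi x $ k)" by (rule test_L2(3)[OF O t])
    fix phi dphi assume s: "test_fun \<Omega> phi dphi"
    have "(LINT x|lebesgue_on \<Omega>. w x \<bullet> dphi x) = (LINT x|lebesgue_on \<Omega>. psi x * dphi x $ k)"
      by (simp add: w_def inner_axis')
    also have "\<dots> = - (LINT x|lebesgue_on \<Omega>. phi x * dpsi x $ k)"
      by (rule ibp_prod(3)[OF O(1) cd gc s])
    finally show "(LINT x|lebesgue_on \<Omega>. w x \<bullet> dphi x) = - (LINT x|lebesgue_on \<Omega>. phi x * dpsi x $ k)" .
  qed
  have L2w: "L2v \<Omega> w"
  proof -
    have "L2 \<Omega> psi" by (rule test_L2(1)[OF O t])
    moreover have "(\<lambda>x. (norm (w x))^2) = (\<lambda>x. (psi x)^2)" by (simp add: w_def fun_eq_iff)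
    moreover have "w \<in> borel_measurable (lebesgue_on \<Omega>)"
      using test_meas(1)[OF t O(1)] unfolding w_def by measurable
    ultimately show ?thesis by (simp add: L2v_def L2_def)
  qed
  have H: "Hdiv \<Omega> w" using L2w wd by (auto simp: Hdiv_def)
  then show "Hdiv \<Omega> (\<lambda>x. psi x *\<^sub>R axis k 1)" by (simp add: w_def[abs_def])
  have hw: "is_weak_div \<Omega> w (wdiv \<Omega> w)" by (rule wdiv_some[OF H])
  have ihw: "integrable (lebesgue_on \<Omega>) (wdiv \<Omega> w)" using hw L2_int[OF O] by (auto simp: is_weak_div_def)
  have idk: "integrable (lebesgue_on \<Omega>) (\<lambda>x. dpsi x $ k)" using L2_int[OF O test_L2(3)[OF O t]] .
  have "AE x in lebesgue_on \<Omega>. wdiv \<Omega> w x = dpsi x $ k"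
  proof (rule ae_eq_scalar[OF O ihw])
    show "(\<lambda>x. dpsi x $ k) \<in> borel_measurable (lebesgue_on \<Omega>)" using idk by (rule borel_measurable_integrable)
    show "\<And>K. compact K \<Longrightarrow> K \<subseteq> \<Omega> \<Longrightarrow> integrable (lebesgue_on \<Omega>) (\<lambda>x. indicator K x * dpsi x $ k)"
      by (rule loc_int_of_int[OF O(1) idk])
    fix phi dphi assume s: "test_fun \<Omega> phi dphi"
    have "(LINT x|lebesgue_on \<Omega>. w x \<bullet> dphi x) = - (LINT x|lebesgue_on \<Omega>. phi x * wdiv \<Omega> w x)"
      using hw s by (auto simp: is_weak_div_def)
    moreover have "(LINT x|lebesgue_on \<Omega>. w x \<bullet> dphi x) = - (LINT x|lebesgue_on \<Omega>. phi x * dpsi x $ k)"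
      using wd s by (auto simp: is_weak_div_def)
    ultimately show "(LINT x|lebesgue_on \<Omega>. phi x * wdiv \<Omega> w x) = (LINT x|lebesgue_on \<Omega>. phi x * dpsi x $ k)"
      by simp
  qed
  then show "AE x in lebesgue_on \<Omega>. wdiv \<Omega> (\<lambda>x. psi x *\<^sub>R axis k 1) x = dpsi x $ k"
    by (simp add: w_def[abs_def])
qed


lemma mv_cont:
  fixes A :: "'a::topological_space \<Rightarrow> real^'n::finite^'m::finite"
  assumes "continuous_on S A"
  shows "continuous_on S (\<lambda>x. A x *v b)"
proof -
  have eq: "(\<lambda>x. A x *v b) = (\<lambda>x. \<chi> i. \<Sum>j\<in>UNIV. A x $ i $ j * b $ j)"
    by (simp add: matrix_vector_mult_def)
  have c: "continuous_on S (\<lambda>x. \<chi> i. \<Sum>j\<in>UNIV. A x $ i $ j * b $ j)"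
    using assms by (intro continuous_on_vec_lambda continuous_on_sum continuous_on_mult
        continuous_on_const continuous_on_component)
  show ?thesis unfolding eq by (rule c)
qed

lemma mv_meas:
  fixes A :: "real^'n::finite \<Rightarrow> real^'n^'n"
  assumes O: "open \<Omega>" and c: "\<And>j. continuous_on \<Omega> (\<lambda>x. A x *v axis j 1)"
    and y: "y \<in> borel_measurable (lebesgue_on \<Omega>)"
  shows "(\<lambda>x. A x *v y x) \<in> borel_measurable (lebesgue_on \<Omega>)"
proof -
  have cm: "(\<lambda>x. A x *v axis j 1) \<in> borel_measurable (lebesgue_on \<Omega>)" for j
    by (rule cont_meas_on[OF O c])
  have ym: "(\<lambda>x. y x $ j) \<in> borel_measurable (lebesgue_on \<Omega>)" for j by (rule nth_meas[OF y])
  have "(\<lambda>x. \<Sum>j\<in>UNIV. y x $ j *\<^sub>R (A x *v axis j 1)) \<in> borel_measurable (lebesgue_on \<Omega>)"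
    using cm ym by (intro borel_measurable_sum borel_measurable_scaleR) auto
  then show ?thesis by (subst mv_expand) simp
qed

lemma mv_bound:
  fixes A :: "real^'n::finite \<Rightarrow> real^'n^'n"
  assumes S: "compact S" and c: "\<And>j. continuous_on S (\<lambda>x. A x *v axis j 1)"
  shows "\<exists>C. \<forall>x\<in>S. \<forall>y. norm (A x *v y) \<le> C * norm y"
proof -
  have ex: "\<forall>j. \<exists>Cj. \<forall>x\<in>S. norm (A x *v axis j 1) \<le> Cj"
  proof
    fix j
    have "compact ((\<lambda>x. A x *v axis j 1) ` S)" by (rule compact_continuous_image[OF c S])
    then have "bounded ((\<lambda>x. A x *v axis j 1) ` S)" by (rule compact_imp_bounded)
    then show "\<exists>Cj. \<forall>x\<in>S. norm (A x *v axis j 1) \<le> Cj" unfolding bounded_iff by auto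
  qed
  from choice[OF ex] obtain Cj where Cj0: "\<forall>j. \<forall>x\<in>S. norm (A x *v axis j 1) \<le> Cj j" by blast
  then have Cj: "\<And>j x. x \<in> S \<Longrightarrow> norm (A x *v axis j 1) \<le> Cj j" by blast
  define C where "C = (\<Sum>j\<in>UNIV. \<bar>Cj j\<bar>)"
  have "norm (A x *v y) \<le> C * norm y" if x: "x \<in> S" for x y
  proof -
    have "norm (A x *v y) = norm (\<Sum>j\<in>UNIV. y $ j *\<^sub>R (A x *v axis j 1))" by (subst mv_expand) simp
    also have "\<dots> \<le> (\<Sum>j\<in>UNIV. norm (y $ j *\<^sub>R (A x *v axis j 1)))" by (rule norm_sum)
    also have "\<dots> \<le> (\<Sum>j\<in>UNIV. norm y * \<bar>Cj j\<bar>)"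
    proof (rule sum_mono)
      fix j
      have "norm (y $ j *\<^sub>R (A x *v axis j 1)) = \<bar>y $ j\<bar> * norm (A x *v axis j 1)" by simp
      also have "\<dots> \<le> norm y * \<bar>Cj j\<bar>"
        using Cj[OF x, of j] component_le_norm_cart[of y j]
        by (intro mult_mono) auto
      finally show "norm (y $ j *\<^sub>R (A x *v axis j 1)) \<le> norm y * \<bar>Cj j\<bar>" .
    qed
    also have "\<dots> = C * norm y" by (simp add: C_def sum_distrib_left mult.commute)
    finally show ?thesis .
  qed
  then show ?thesis by blast
qed


lemma H1_zero:
  fixes \<Omega> :: "(real^'n::finite) set"
  shows "H1 \<Omega> (\<lambda>x. 0)"
proof -
  have "is_weak_grad \<Omega> (\<lambda>x. 0) (\<lambda>x. 0)" by (simp add: is_weak_grad_def L2v_def)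
  then show ?thesis by (auto simp: H1_def L2_def)
qed

lemma AE_in_dom: "AE x in lebesgue_on \<Omega>. x \<in> \<Omega>"
  by (rule AE_I2) (simp add: space_restrict_space)

lemma step_v:
  fixes \<Omega> :: "(real ^ 'n::finite) set"
    and D :: "real ^ 'n \<Rightarrow> real ^ 'n ^ 'n"
    and f c Cp :: "real ^ 'n \<Rightarrow> real"
    and v :: "real ^ 'n \<Rightarrow> real ^ 'n"
  assumes O: "open \<Omega>" "bounded \<Omega>"
    and Dinv: "\<And>x. x \<in> \<Omega> \<Longrightarrow> invertible (D x)"
    and Dsym: "\<And>x. x \<in> \<Omega> \<Longrightarrow> transpose (D x) = D x"
    and Dc: "\<And>j. continuous_on \<Omega> (\<lambda>x. D x *v axis j 1)"
    and Dic: "\<And>j. continuous_on \<Omega> (\<lambda>x. matrix_inv (D x) *v axis j 1)"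
    and DiB: "\<exists>C. \<forall>x\<in>\<Omega>. \<forall>y. norm (matrix_inv (D x) *v y) \<le> C * norm y"
    and cp: "H1 \<Omega> Cp" and c_H1: "H1 \<Omega> c" and v_Hdiv: "Hdiv \<Omega> v"
    and cder: "\<And>x. x \<in> \<Omega> \<Longrightarrow> (c has_derivative (\<lambda>h. Gc x \<bullet> h)) (at x)"
    and gcont: "continuous_on \<Omega> Gc"
    and weak: "\<forall>q w. H1 \<Omega> q \<longrightarrow> Hdiv \<Omega> w \<longrightarrow>
        (LINT x|lebesgue_on \<Omega>. w x \<bullet> (matrix_inv (D x) *v v x))
      - (LINT x|lebesgue_on \<Omega>. wdiv \<Omega> w x * c x)
      + bdry_pair \<Omega> w Cp
      - (LINT x|lebesgue_on \<Omega>. q x * (wdiv \<Omega> v x - f x))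
      - (1/2) * (LINT x|lebesgue_on \<Omega>.
            (matrix_inv (D x) *v w x + wgrad \<Omega> q x) \<bullet>
            (D x *v (matrix_inv (D x) *v v x + wgrad \<Omega> c x))) = 0"
  shows "AE x in lebesgue_on \<Omega>. matrix_inv (D x) *v v x + wgrad \<Omega> c x = 0"
proof -
  define M where "M = lebesgue_on \<Omega>"
  define gc where "gc = wgrad \<Omega> c"
  define gCp where "gCp = wgrad \<Omega> Cp"
  define g0 where "g0 = wgrad \<Omega> (\<lambda>x::real^'n. 0::real)"
  define Y where "Y x = matrix_inv (D x) *v v x + gc x" for x
  have gcw: "is_weak_grad \<Omega> c gc" unfolding gc_def by (rule wgrad_some[OF c_H1])
  have gCpw: "is_weak_grad \<Omega> Cp gCp" unfolding gCp_def by (rule wgrad_some[OF cp])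
  have g0w: "is_weak_grad \<Omega> (\<lambda>x. 0) g0" unfolding g0_def by (rule wgrad_some[OF H1_zero])
  have cL2: "L2 \<Omega> c" and CpL2: "L2 \<Omega> Cp" using c_H1 cp by (auto simp: H1_def)
  have cm: "c \<in> borel_measurable M" "Cp \<in> borel_measurable M" using cL2 CpL2 by (auto simp: L2_def M_def)
  have gci: "integrable M gc" using gcw L2v_int[OF O] by (auto simp: is_weak_grad_def M_def)
  have gcm: "gc \<in> borel_measurable M" using gci by (rule borel_measurable_integrable)
  have gCpi: "integrable M gCp" using gCpw L2v_int[OF O] by (auto simp: is_weak_grad_def M_def)
  have g0m: "g0 \<in> borel_measurable M" using g0w by (auto simp: is_weak_grad_def L2v_def M_def)
  have vL2: "L2v \<Omega> v" using v_Hdiv by (simp add: Hdiv_def)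
  have vi: "integrable M v" using L2v_int[OF O vL2] by (simp add: M_def)
  have vm: "v \<in> borel_measurable M" using vi by (rule borel_measurable_integrable)
  have Divm: "(\<lambda>x. matrix_inv (D x) *v v x) \<in> borel_measurable M"
    unfolding M_def by (rule mv_meas[OF O(1) Dic]) (use vm in \<open>simp add: M_def\<close>)
  obtain C where C: "\<And>x y. x \<in> \<Omega> \<Longrightarrow> norm (matrix_inv (D x) *v y) \<le> C * norm y" using DiB by blast
  have Divi: "integrable M (\<lambda>x. matrix_inv (D x) *v v x)"
  proof (rule Bochner_Integration.integrable_bound[of _ "\<lambda>x. C * norm (v x)"])
    show "integrable M (\<lambda>x. C * norm (v x))" using vi by auto
    show "(\<lambda>x. matrix_inv (D x) *v v x) \<in> borel_measurable M" by (rule Divm)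
    show "AE x in M. norm (matrix_inv (D x) *v v x) \<le> norm (C * norm (v x))"
      using AE_in_dom[of \<Omega>] unfolding M_def by eventually_elim (use C in \<open>auto intro: order_trans[OF _ abs_ge_self]\<close>)
  qed
  have Yi: "integrable M Y" unfolding Y_def using Divi gci by simp
  have gcGc: "AE x in M. gc x = Gc x" unfolding M_def by (rule C1_weak_grad_ae[OF O cder gcont gcw cL2])
  have g00: "AE x in M. g0 x = 0" unfolding M_def by (rule zero_weak_grad_ae[OF O g0w])
  show ?thesis
  proof (rule vec_ae)
    fix k
    have Yki: "integrable M (\<lambda>x. Y x $ k)" using integrable_bounded_linear[OF bounded_linear_vec_nth Yi] .
    have "AE x in M. Y x $ k = 0"
    unfolding M_def proof (rule ae_eq_scalar[OF O Yki[unfolded M_def]])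
      fix psi dpsi assume t: "test_fun \<Omega> psi dpsi"
      note T = test_fun_facts[OF t]
      obtain B where B: "\<And>x. \<bar>psi x\<bar> \<le> B \<and> norm (dpsi x) \<le> B" using test_bdd[OF t] by blast
      have psim: "psi \<in> borel_measurable M" "dpsi \<in> borel_measurable M"
        using test_meas[OF t O(1)] by (auto simp: M_def)
      have dpsikm: "(\<lambda>x. dpsi x $ k) \<in> borel_measurable M" by (rule nth_meas[OF psim(2)])
      define w where "w x = psi x *\<^sub>R axis k (1::real)" for x
      have wH: "Hdiv \<Omega> w" using axis_div(1)[OF O t, of k] by (simp add: w_def[abs_def])
      have hwae: "AE x in M. wdiv \<Omega> w x = dpsi x $ k"
        unfolding M_def w_def[abs_def] using axis_div(2)[OF O t, of k] by simp
      have hwm: "wdiv \<Omega> w \<in> borel_measurable M"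
        using wdiv_some[OF wH] by (auto simp: is_weak_div_def L2_def M_def)
      have wm: "w \<in> borel_measurable M" unfolding w_def using psim by measurable
      from weak[rule_format, OF H1_zero wH]
      have E: "(LINT x|M. w x \<bullet> (matrix_inv (D x) *v v x))
        - (LINT x|M. wdiv \<Omega> w x * c x) + bdry_pair \<Omega> w Cp
        - (LINT x|M. 0 * (wdiv \<Omega> v x - f x))
        - (1/2) * (LINT x|M. (matrix_inv (D x) *v w x + g0 x) \<bullet> (D x *v (matrix_inv (D x) *v v x + gc x))) = 0"
        by (simp add: M_def g0_def gc_def)
      have t1: "(LINT x|M. w x \<bullet> (matrix_inv (D x) *v v x)) = (LINT x|M. psi x * (matrix_inv (D x) *v v x) $ k)"
        by (simp add: w_def inner_axis')
      have t2: "(LINT x|M. wdiv \<Omega> w x * c x) = - (LINT x|M. psi x * gc x $ k)"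
      proof -
        have "(LINT x|M. wdiv \<Omega> w x * c x) = (LINT x|M. c x * dpsi x $ k)"
        proof (rule integral_cong_AE)
          show "(\<lambda>x. wdiv \<Omega> w x * c x) \<in> borel_measurable M" using hwm cm(1) by measurable
          show "(\<lambda>x. c x * dpsi x $ k) \<in> borel_measurable M" using cm(1) dpsikm by measurable
          show "AE x in M. wdiv \<Omega> w x * c x = c x * dpsi x $ k" using hwae by eventually_elim simp
        qed
        also have "\<dots> = - (LINT x|M. psi x * Gc x $ k)"
          unfolding M_def by (rule ibp_prod(3)[OF O(1) cder gcont t])
        also have "(LINT x|M. psi x * Gc x $ k) = (LINT x|M. psi x * gc x $ k)"
        proof (rule integral_cong_AE)
          show "(\<lambda>x. psi x * Gc x $ k) \<in> borel_measurable M"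
            using psim cont_meas_on[OF O(1) continuous_on_component[OF gcont, of k]]
            by (simp add: M_def)
          show "(\<lambda>x. psi x * gc x $ k) \<in> borel_measurable M" using psim nth_meas[OF gcm] by measurable
          show "AE x in M. psi x * Gc x $ k = psi x * gc x $ k" using gcGc by eventually_elim simp
        qed
        finally show ?thesis .
      qed
      have t3: "bdry_pair \<Omega> w Cp = 0"
      proof -
        have "(LINT x|M. wdiv \<Omega> w x * Cp x) = (LINT x|M. Cp x * dpsi x $ k)"
        proof (rule integral_cong_AE)
          show "(\<lambda>x. wdiv \<Omega> w x * Cp x) \<in> borel_measurable M" using hwm cm(2) by measurable
          show "(\<lambda>x. Cp x * dpsi x $ k) \<in> borel_measurable M" using cm(2) dpsikm by measurable
          show "AE x in M. wdiv \<Omega> w x * Cp x = Cp x * dpsi x $ k" using hwae by eventually_elim simp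
        qed
        also have "\<dots> = - (LINT x|M. psi x * gCp x $ k)"
          unfolding M_def by (rule weak_grad_comp[OF O gCpw CpL2 t])
        finally have a: "(LINT x|M. wdiv \<Omega> w x * Cp x) = - (LINT x|M. psi x * gCp x $ k)" .
        have b: "(LINT x|M. w x \<bullet> gCp x) = (LINT x|M. psi x * gCp x $ k)"
          by (simp add: w_def inner_axis')
        show ?thesis using a b by (simp add: bdry_pair_def M_def gCp_def)
      qed
      have t5: "(LINT x|M. (matrix_inv (D x) *v w x + g0 x) \<bullet> (D x *v (matrix_inv (D x) *v v x + gc x)))
          = (LINT x|M. psi x * Y x $ k)"
      proof (rule integral_cong_AE)
        have a: "(\<lambda>x. matrix_inv (D x) *v w x) \<in> borel_measurable M"
          unfolding M_def by (rule mv_meas[OF O(1) Dic]) (use wm in \<open>simp add: M_def\<close>)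
        have b: "(\<lambda>x. D x *v (matrix_inv (D x) *v v x + gc x)) \<in> borel_measurable M"
          unfolding M_def by (rule mv_meas[OF O(1) Dc]) (use Divm gcm in \<open>simp add: M_def\<close>)
        show "(\<lambda>x. (matrix_inv (D x) *v w x + g0 x) \<bullet> (D x *v (matrix_inv (D x) *v v x + gc x))) \<in> borel_measurable M"
          using a b g0m by measurable
        show "(\<lambda>x. psi x * Y x $ k) \<in> borel_measurable M"
          using psim nth_meas[OF borel_measurable_integrable[OF Yi]] by measurable
        show "AE x in M. (matrix_inv (D x) *v w x + g0 x) \<bullet> (D x *v (matrix_inv (D x) *v v x + gc x)) = psi x * Y x $ k"
          using g00 AE_in_dom[of \<Omega>] unfolding M_def[symmetric]
        proof eventually_elim
          case (elim x)
          then have x: "x \<in> \<Omega>" "g0 x = 0" by auto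
          have iv: "invertible (D x)" by (rule Dinv[OF x(1)])
          have sy: "transpose (matrix_inv (D x)) = matrix_inv (D x)"
            by (rule matrix_inv_sym[OF iv Dsym[OF x(1)]])
          have "(matrix_inv (D x) *v w x + g0 x) \<bullet> (D x *v (matrix_inv (D x) *v v x + gc x))
              = (matrix_inv (D x) *v w x) \<bullet> (v x + D x *v gc x)"
            using x(2) by (simp add: matrix_vector_right_distrib matrix_inv_mv(1)[OF iv])
          also have "\<dots> = w x \<bullet> (matrix_inv (D x) *v (v x + D x *v gc x))"
            by (rule sym_inner[OF sy])
          also have "\<dots> = w x \<bullet> Y x"
            by (simp add: Y_def matrix_vector_right_distrib matrix_inv_mv(2)[OF iv])
          also have "\<dots> = psi x * Y x $ k" by (simp add: w_def inner_axis')
          finally show ?case .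
        qed
      qed
      have i1: "integrable M (\<lambda>x. psi x * (matrix_inv (D x) *v v x) $ k)"
        using int_scale_bdd2[OF integrable_bounded_linear[OF bounded_linear_vec_nth Divi] psim(1)] B by auto
      have i2: "integrable M (\<lambda>x. psi x * gc x $ k)"
        using int_scale_bdd2[OF integrable_bounded_linear[OF bounded_linear_vec_nth gci] psim(1)] B by auto
      have split: "(LINT x|M. psi x * Y x $ k) = (LINT x|M. psi x * (matrix_inv (D x) *v v x) $ k) + (LINT x|M. psi x * gc x $ k)"
        using Bochner_Integration.integral_add[OF i1 i2] by (simp add: Y_def algebra_simps)
      have "(LINT x|M. psi x * Y x $ k) = 0"
        using E t1 t2 t3 t5 split by simp
      then show "(LINT x|lebesgue_on \<Omega>. psi x * Y x $ k) = (LINT x|lebesgue_on \<Omega>. psi x * 0)"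
        by (simp add: M_def)
    qed auto
    then show "AE x in lebesgue_on \<Omega>. (matrix_inv (D x) *v v x + wgrad \<Omega> c x) $ k = 0 $ k"
      unfolding M_def Y_def gc_def by simp
  qed
qed


lemma Hdiv_zero:
  fixes \<Omega> :: "(real^'n::finite) set"
  shows "Hdiv \<Omega> (\<lambda>x. 0)"
proof -
  have "is_weak_div \<Omega> (\<lambda>x. 0::real^'n) (\<lambda>x. 0)" by (simp add: is_weak_div_def L2_def)
  then show ?thesis by (auto simp: Hdiv_def L2v_def)
qed

lemma step_q:
  fixes \<Omega> :: "(real ^ 'n::finite) set"
    and D :: "real ^ 'n \<Rightarrow> real ^ 'n ^ 'n"
    and f c Cp :: "real ^ 'n \<Rightarrow> real"
    and v :: "real ^ 'n \<Rightarrow> real ^ 'n"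
  assumes O: "open \<Omega>" "bounded \<Omega>"
    and v_Hdiv: "Hdiv \<Omega> v" and f_L2: "L2 \<Omega> f"
    and Y0: "AE x in lebesgue_on \<Omega>. matrix_inv (D x) *v v x + wgrad \<Omega> c x = 0"
    and weak: "\<forall>q w. H1 \<Omega> q \<longrightarrow> Hdiv \<Omega> w \<longrightarrow>
        (LINT x|lebesgue_on \<Omega>. w x \<bullet> (matrix_inv (D x) *v v x))
      - (LINT x|lebesgue_on \<Omega>. wdiv \<Omega> w x * c x)
      + bdry_pair \<Omega> w Cp
      - (LINT x|lebesgue_on \<Omega>. q x * (wdiv \<Omega> v x - f x))
      - (1/2) * (LINT x|lebesgue_on \<Omega>.
            (matrix_inv (D x) *v w x + wgrad \<Omega> q x) \<bullet>
            (D x *v (matrix_inv (D x) *v v x + wgrad \<Omega> c x))) = 0"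
    and t: "test_fun \<Omega> phi dphi"
  shows "(LINT x|lebesgue_on \<Omega>. v x \<bullet> dphi x) = - (LINT x|lebesgue_on \<Omega>. phi x * f x)"
proof -
  define M where "M = lebesgue_on \<Omega>"
  have R0: "(LINT x|M. wgrad \<Omega> q x \<bullet> (D x *v (matrix_inv (D x) *v v x + wgrad \<Omega> c x))) = 0" for q
    unfolding M_def by (rule integral_eq_zero_AE) (use Y0 in \<open>eventually_elim, simp\<close>)
  note E1 = weak[rule_format, OF test_weak_grad(2)[OF O t] Hdiv_zero]
  note E0 = weak[rule_format, OF H1_zero Hdiv_zero]
  have Q: "(LINT x|M. phi x * (wdiv \<Omega> v x - f x)) = 0"
    using E1 E0 by (simp add: R0[unfolded M_def] M_def)
  have hv: "is_weak_div \<Omega> v (wdiv \<Omega> v)" by (rule wdiv_some[OF v_Hdiv])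
  have hvi: "integrable M (wdiv \<Omega> v)" using hv L2_int[OF O] by (auto simp: is_weak_div_def M_def)
  have fi: "integrable M f" using L2_int[OF O f_L2] by (simp add: M_def)
  obtain B where B: "\<And>x. \<bar>phi x\<bar> \<le> B" using test_bdd[OF t] by blast
  have pm: "phi \<in> borel_measurable M" using test_meas[OF t O(1)] by (simp add: M_def)
  have i1: "integrable M (\<lambda>x. phi x * wdiv \<Omega> v x)" using int_scale_bdd2[OF hvi pm B] by simp
  have i2: "integrable M (\<lambda>x. phi x * f x)" using int_scale_bdd2[OF fi pm B] by simp
  have "(LINT x|M. phi x * wdiv \<Omega> v x) = (LINT x|M. phi x * f x)"
    using Q Bochner_Integration.integral_diff[OF i1 i2] by (simp add: right_diff_distrib)
  moreover have "(LINT x|M. v x \<bullet> dphi x) = - (LINT x|M. phi x * wdiv \<Omega> v x)"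
    using hv t by (auto simp: is_weak_div_def M_def)
  ultimately show ?thesis by (simp add: M_def)
qed


lemma ae_zero_cont:
  fixes g :: "real^'n::finite \<Rightarrow> real"
  assumes O: "open \<Omega>" and g: "continuous_on \<Omega> g" and ae: "AE x in lebesgue_on \<Omega>. g x = 0"
    and x0: "x0 \<in> \<Omega>"
  shows "g x0 = 0"
proof (rule ccontr)
  assume ne: "g x0 \<noteq> 0"
  define V where "V = \<Omega> \<inter> g -` (- {0})"
  have Vo: "open V" unfolding V_def by (rule continuous_open_preimage[OF g O]) auto
  have Vne: "V \<noteq> {}" using x0 ne by (auto simp: V_def)
  have "AE x in lebesgue. x \<in> \<Omega> \<longrightarrow> g x = 0" using ae O by (subst (asm) AE_restrict_space_iff) auto
  then obtain N where N: "{x \<in> space lebesgue. \<not> (x \<in> \<Omega> \<longrightarrow> g x = 0)} \<subseteq> N" "emeasure lebesgue N = 0" "N \<in> sets lebesgue"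
    by (rule AE_E)
  have "negligible N" using N by (simp add: negligible_iff_null_sets null_sets_def)
  moreover have "V \<subseteq> N" using N(1) by (auto simp: V_def)
  ultimately have "negligible V" using negligible_subset by blast
  then show False using open_not_negligible[OF Vo Vne] by blast
qed

lemma kappa_test:
  fixes c :: "real^'n::finite \<Rightarrow> real"
  assumes O: "open \<Omega>"
    and cder: "\<And>x. x \<in> \<Omega> \<Longrightarrow> (c has_derivative (\<lambda>h. Gc x \<bullet> h)) (at x)"
    and gcont: "continuous_on \<Omega> Gc"
    and K: "compact K" "K \<subseteq> \<Omega>" and Kc: "\<And>x. x \<in> \<Omega> \<Longrightarrow> c x \<le> \<kappa> \<Longrightarrow> x \<in> K"
  shows "test_fun \<Omega> (\<lambda>x. if x \<in> \<Omega> then (max 0 (\<kappa> - c x))^2 else 0)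
                    (\<lambda>x. if x \<in> \<Omega> then (- (2 * max 0 (\<kappa> - c x))) *\<^sub>R Gc x else 0)"
proof -
  define phi where "phi x = (if x \<in> \<Omega> then (max 0 (\<kappa> - c x))^2 else 0)" for x
  define dphi where "dphi x = (if x \<in> \<Omega> then (- (2 * max 0 (\<kappa> - c x))) *\<^sub>R Gc x else 0)" for x
  have ccont: "continuous_on \<Omega> c"
    by (rule continuous_at_imp_continuous_on) (use cder has_derivative_continuous in blast)
  have Kcl: "closed K" using K compact_imp_closed by auto
  have nz: "x \<in> K" if "phi x \<noteq> 0" for x
  proof -
    have "x \<in> \<Omega>" "c x < \<kappa>" using that by (auto simp: phi_def split: if_splits)
    then show ?thesis using Kc by auto
  qed
  have z0: "phi x = 0" "dphi x = 0" if "x \<notin> K" for x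
  proof -
    show "phi x = 0" using nz that by blast
    show "dphi x = 0"
    proof (cases "x \<in> \<Omega>")
      case True
      then have "\<kappa> < c x" using Kc that by force
      then show ?thesis using True by (simp add: dphi_def)
    qed (simp add: dphi_def)
  qed
  have Ko: "open (- K)" using Kcl by auto
  have der: "(phi has_derivative (\<lambda>h. dphi x \<bullet> h)) (at x)" for x
  proof (cases "x \<in> \<Omega>")
    case True
    have p: "((\<lambda>t. (max 0 t)^2) has_derivative (*) (2 * max 0 (\<kappa> - c x))) (at (\<kappa> - c x))"
      using pp_deriv[of "\<kappa> - c x"] by (simp add: has_field_derivative_def)
    have h: "((\<lambda>y. \<kappa> - c y) has_derivative (\<lambda>h. - (Gc x \<bullet> h))) (at x)"
      using cder[OF True] by (auto intro!: derivative_eq_intros)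
    from has_derivative_compose[OF h p]
    have "((\<lambda>y. (max 0 (\<kappa> - c y))^2) has_derivative (\<lambda>h. 2 * max 0 (\<kappa> - c x) * - (Gc x \<bullet> h))) (at x)" .
    moreover have "(\<lambda>h. 2 * max 0 (\<kappa> - c x) * - (Gc x \<bullet> h)) = (\<lambda>h. dphi x \<bullet> h)"
      using True by (auto simp: dphi_def fun_eq_iff)
    ultimately have "((\<lambda>y. (max 0 (\<kappa> - c y))^2) has_derivative (\<lambda>h. dphi x \<bullet> h)) (at x)" by simp
    then show ?thesis
      by (rule has_derivative_transform_within_open[OF _ O True]) (simp add: phi_def)
  next
    case False
    then have xK: "x \<in> - K" using K by auto
    have "((\<lambda>x. 0::real) has_derivative (\<lambda>h. 0)) (at x)" by simp
    then have "(phi has_derivative (\<lambda>h. 0)) (at x)"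
      by (rule has_derivative_transform_within_open[OF _ Ko xK]) (use z0 in auto)
    then show ?thesis using False by (simp add: dphi_def)
  qed
  have dcont: "continuous_on UNIV dphi"
  proof -
    have "isCont dphi x" for x
    proof (cases "x \<in> \<Omega>")
      case True
      have c1: "continuous_on \<Omega> (\<lambda>y. (- (2 * max 0 (\<kappa> - c y))) *\<^sub>R Gc y)"
        using ccont gcont by (intro continuous_intros)
      then have ic: "isCont (\<lambda>y. (- (2 * max 0 (\<kappa> - c y))) *\<^sub>R Gc y) x"
        using O True continuous_on_eq_continuous_at by blast
      have ev: "eventually (\<lambda>y. dphi y = (- (2 * max 0 (\<kappa> - c y))) *\<^sub>R Gc y) (nhds x)"
        using eventually_nhds_in_open[OF O True] by eventually_elim (simp add: dphi_def)
      show ?thesis using isCont_cong[OF ev] ic by simp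
    next
      case False
      then have xK: "x \<in> - K" using K by auto
      have ev: "eventually (\<lambda>y. dphi y = 0) (nhds x)"
        using eventually_nhds_in_open[OF Ko xK] by eventually_elim (use z0 in simp)
      show ?thesis using isCont_cong[OF ev] by simp
    qed
    then show ?thesis by (simp add: continuous_at_imp_continuous_on)
  qed
  have sub: "{x. phi x \<noteq> 0} \<subseteq> K" using nz by blast
  have cl: "closure {x. phi x \<noteq> 0} \<subseteq> K" using closure_minimal[OF sub Kcl] .
  have bd: "bounded {x. phi x \<noteq> 0}" using sub compact_imp_bounded[OF K(1)] bounded_subset by blast
  have "test_fun \<Omega> phi dphi"
    unfolding test_fun_def using der dcont cl bd K(2) by auto
  then show ?thesis by (simp add: phi_def[abs_def] dphi_def[abs_def])
qed


lemma min_principle: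
  fixes \<Omega> :: "(real^'n::finite) set" and c :: "real^'n \<Rightarrow> real" and D :: "real^'n \<Rightarrow> real^'n^'n"
  assumes O: "open \<Omega>" "bounded \<Omega>" "connected \<Omega>" "\<Omega> \<noteq> {}"
    and cder: "\<And>x. x \<in> \<Omega> \<Longrightarrow> (c has_derivative (\<lambda>h. Gc x \<bullet> h)) (at x)"
    and gcont: "continuous_on \<Omega> Gc"
    and c0: "continuous_on (closure \<Omega>) c"
    and Dpos: "\<And>x u. x \<in> \<Omega> \<Longrightarrow> u \<noteq> 0 \<Longrightarrow> u \<bullet> (D x *v u) > 0"
    and Dsym: "\<And>x. x \<in> \<Omega> \<Longrightarrow> transpose (D x) = D x"
    and Dc: "\<And>j. continuous_on \<Omega> (\<lambda>x. D x *v axis j 1)"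
    and super: "\<And>phi dphi. test_fun \<Omega> phi dphi \<Longrightarrow> (\<And>x. phi x \<ge> 0) \<Longrightarrow>
                 (LINT x|lebesgue_on \<Omega>. (D x *v Gc x) \<bullet> dphi x) \<ge> 0"
  shows "(INF x\<in>closure \<Omega>. c x) = (INF x\<in>frontier \<Omega>. c x)"
proof -
  have cl_comp: "compact (closure \<Omega>)" using O(2) by simp
  have fr_comp: "compact (frontier \<Omega>)" using O(2) by (rule compact_frontier_bounded)
  have fr_ne: "frontier \<Omega> \<noteq> {}"
  proof (rule frontier_not_empty[OF O(4)])
    show "\<Omega> \<noteq> UNIV" using O(2) not_bounded_UNIV by blast
  qed
  have fr_cl: "frontier \<Omega> \<subseteq> closure \<Omega>" by (simp add: frontier_def)
  obtain xs where xs: "xs \<in> closure \<Omega>" "\<And>y. y \<in> closure \<Omega> \<Longrightarrow> c xs \<le> c y"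
    using continuous_attains_inf[OF cl_comp _ c0] O(4) by (metis closure_eq_empty)
  obtain xf where xf: "xf \<in> frontier \<Omega>" "\<And>y. y \<in> frontier \<Omega> \<Longrightarrow> c xf \<le> c y"
    using continuous_attains_inf[OF fr_comp fr_ne continuous_on_subset[OF c0 fr_cl]] by blast
  have I1: "(INF x\<in>closure \<Omega>. c x) = c xs" by (rule cInf_eq_minimum) (use xs in auto)
  have I2: "(INF x\<in>frontier \<Omega>. c x) = c xf" by (rule cInf_eq_minimum) (use xf in auto)
  have le: "c xs \<le> c xf" using xs(2) xf(1) fr_cl by blast
  have "\<not> c xs < c xf"
  proof
    assume lt: "c xs < c xf"
    have xsO: "xs \<in> \<Omega>"
    proof -
      have "xs \<notin> frontier \<Omega>" using lt xf(2) by force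
      then show ?thesis using xs(1) closure_Un_frontier by blast
    qed
    define \<kappa> where "\<kappa> = (c xs + c xf) / 2"
    have k1: "c xs < \<kappa>" "\<kappa> < c xf" using lt by (auto simp: \<kappa>_def)
    define K where "K = {x \<in> closure \<Omega>. c x \<le> \<kappa>}"
    have Kcl: "closed K" unfolding K_def
      by (rule continuous_on_closed_Collect_le[OF c0 continuous_on_const]) simp
    have Kcomp: "compact K"
    proof -
      have "bounded K" using bounded_subset[OF bounded_closure[OF O(2)]] by (auto simp: K_def)
      then show ?thesis using Kcl by (simp add: compact_eq_bounded_closed)
    qed
    have KO: "K \<subseteq> \<Omega>"
    proof
      fix x assume x: "x \<in> K"
      then have "x \<notin> frontier \<Omega>" using xf(2) k1 by (force simp: K_def)
      then show "x \<in> \<Omega>" using x closure_Un_frontier by (auto simp: K_def)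
    qed
    have Kc: "\<And>x. x \<in> \<Omega> \<Longrightarrow> c x \<le> \<kappa> \<Longrightarrow> x \<in> K" using closure_subset by (auto simp: K_def)
    define phi where "phi x = (if x \<in> \<Omega> then (max 0 (\<kappa> - c x))^2 else 0)" for x
    define dphi where "dphi x = (if x \<in> \<Omega> then (- (2 * max 0 (\<kappa> - c x))) *\<^sub>R Gc x else 0)" for x
    have t: "test_fun \<Omega> phi dphi"
      unfolding phi_def[abs_def] dphi_def[abs_def] by (rule kappa_test[OF O(1) cder gcont Kcomp KO Kc])
    have pnn: "phi x \<ge> 0" for x by (simp add: phi_def)
    have ccont: "continuous_on \<Omega> c"
      by (rule continuous_at_imp_continuous_on) (use cder has_derivative_continuous in blast)
    have DGc: "continuous_on \<Omega> (\<lambda>x. D x *v Gc x)"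
    proof -
      have "continuous_on \<Omega> (\<lambda>x. \<Sum>j\<in>UNIV. Gc x $ j *\<^sub>R (D x *v axis j 1))"
        using Dc gcont by (intro continuous_on_sum continuous_on_scaleR continuous_on_component) auto
      then show ?thesis by (subst mv_expand) simp
    qed
    define G where "G x = 2 * max 0 (\<kappa> - c x) * ((D x *v Gc x) \<bullet> Gc x)" for x
    have Gnn: "G x \<ge> 0" if "x \<in> \<Omega>" for x
    proof -
      have "(D x *v Gc x) \<bullet> Gc x \<ge> 0"
        using Dpos[OF that, of "Gc x"] by (cases "Gc x = 0") (auto simp: inner_commute)
      then show ?thesis by (simp add: G_def)
    qed
    have Gcont: "continuous_on \<Omega> G" unfolding G_def using ccont DGc gcont by (intro continuous_intros)
    have Gz: "G x = 0" if "x \<in> \<Omega>" "x \<notin> K" for x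
      using that Kc by (force simp: G_def)
    have Gint: "integrable (lebesgue_on \<Omega>) G"
      using restrict_compact_int(1)[OF _ Kcomp KO continuous_on_subset[OF Gcont KO] Gz] O(1) by simp
    have eqI: "(LINT x|lebesgue_on \<Omega>. (D x *v Gc x) \<bullet> dphi x) = - (LINT x|lebesgue_on \<Omega>. G x)"
    proof -
      have "(LINT x|lebesgue_on \<Omega>. (D x *v Gc x) \<bullet> dphi x) = (LINT x|lebesgue_on \<Omega>. - G x)"
      proof (rule integral_cong_AE)
        show "(\<lambda>x. (D x *v Gc x) \<bullet> dphi x) \<in> borel_measurable (lebesgue_on \<Omega>)"
          using cont_meas_on[OF O(1) DGc] test_meas(2)[OF t O(1)] by measurable
        show "(\<lambda>x. - G x) \<in> borel_measurable (lebesgue_on \<Omega>)"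
          using cont_meas_on[OF O(1) Gcont] by measurable
        show "AE x in lebesgue_on \<Omega>. (D x *v Gc x) \<bullet> dphi x = - G x"
          using AE_in_dom[of \<Omega>] by eventually_elim (simp add: dphi_def G_def)
      qed
      then show ?thesis by simp
    qed
    have "(LINT x|lebesgue_on \<Omega>. G x) \<le> 0" using super[OF t pnn] eqI by simp
    moreover have "(LINT x|lebesgue_on \<Omega>. G x) \<ge> 0"
      by (rule integral_nonneg_AE) (use AE_in_dom[of \<Omega>] Gnn in \<open>auto elim: AE_mp\<close>)
    ultimately have "(LINT x|lebesgue_on \<Omega>. G x) = 0" by simp
    moreover have "AE x in lebesgue_on \<Omega>. 0 \<le> G x"
      using AE_in_dom[of \<Omega>] by eventually_elim (rule Gnn)
    ultimately have "AE x in lebesgue_on \<Omega>. G x = 0"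
      using integral_nonneg_eq_0_iff_AE[OF Gint] by simp
    then have G0: "\<And>x. x \<in> \<Omega> \<Longrightarrow> G x = 0" using ae_zero_cont[OF O(1) Gcont] by blast
    have grad0: "Gc x = 0" if "x \<in> \<Omega>" "c x < \<kappa>" for x
    proof (rule ccontr)
      assume "Gc x \<noteq> 0"
      then have "(D x *v Gc x) \<bullet> Gc x > 0" using Dpos[OF that(1)] by (simp add: inner_commute)
      moreover have "max 0 (\<kappa> - c x) > 0" using that(2) by simp
      ultimately have "G x > 0" by (simp add: G_def)
      then show False using G0[OF that(1)] by simp
    qed
    define Z where "Z = {x \<in> \<Omega>. c x = c xs}"
    have Zopen: "openin (top_of_set \<Omega>) Z"
    proof -
      have "open Z" unfolding open_contains_ball
      proof
        fix x assume x: "x \<in> Z"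
        then have xO: "x \<in> \<Omega>" and cx: "c x = c xs" by (auto simp: Z_def)
        define U where "U = \<Omega> \<inter> c -` {..<\<kappa>}"
        have Uo: "open U" unfolding U_def by (rule continuous_open_preimage[OF ccont O(1)]) auto
        have xU: "x \<in> U" using xO cx k1 by (simp add: U_def)
        obtain r where r: "r > 0" "ball x r \<subseteq> U" using openE[OF Uo xU] by blast
        have "\<exists>a. \<forall>y\<in>ball x r. c y = a"
        proof (rule has_derivative_zero_constant)
          show "convex (ball x r)" by simp
          fix y assume y: "y \<in> ball x r"
          then have yU: "y \<in> \<Omega>" "c y < \<kappa>" using r(2) by (auto simp: U_def)
          have "(c has_derivative (\<lambda>h. Gc y \<bullet> h)) (at y)" by (rule cder[OF yU(1)])
          then have "(c has_derivative (\<lambda>h. 0)) (at y)" using grad0[OF yU] by simp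
          then show "(c has_derivative (\<lambda>h. 0)) (at y within ball x r)" by (rule has_derivative_at_withinI)
        qed
        then obtain a where a: "\<And>y. y \<in> ball x r \<Longrightarrow> c y = a" by blast
        have "c x = a" using a r(1) by simp
        have "ball x r \<subseteq> Z"
        proof
          fix y assume y: "y \<in> ball x r"
          then have "y \<in> \<Omega>" using r(2) by (auto simp: U_def)
          moreover have "c y = c xs" using a[OF y] \<open>c x = a\<close> cx by simp
          ultimately show "y \<in> Z" by (simp add: Z_def)
        qed
        then show "\<exists>e>0. ball x e \<subseteq> Z" using r(1) by blast
      qed
      moreover have "Z \<subseteq> \<Omega>" by (auto simp: Z_def)
      ultimately show ?thesis by (intro open_subset)
    qed
    have Zclosed: "closedin (top_of_set \<Omega>) Z"
      unfolding Z_def by (rule continuous_closedin_preimage_constant[OF ccont])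
    have "Z \<noteq> {}" using xsO by (auto simp: Z_def)
    moreover have "\<forall>T. openin (top_of_set \<Omega>) T \<and> closedin (top_of_set \<Omega>) T \<longrightarrow> T = {} \<or> T = \<Omega>"
      using O(3) by (simp add: connected_clopen)
    ultimately have "Z = \<Omega>" using Zopen Zclosed by meson
    then have "\<Omega> \<subseteq> {x \<in> closure \<Omega>. c x = c xs}" using closure_subset by (auto simp: Z_def)
    moreover have "closed {x \<in> closure \<Omega>. c x = c xs}"
      by (rule continuous_closed_preimage_constant[OF c0]) simp
    ultimately have "closure \<Omega> \<subseteq> {x \<in> closure \<Omega>. c x = c xs}" by (rule closure_minimal)
    then have "c xf = c xs" using xf(1) fr_cl by blast
    then show False using lt by simp
  qed
  then show ?thesis using I1 I2 le by simp
qed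


lemma mv_uminus: "(A::real^'n::finite^'m::finite) *v (- y) = - (A *v y)"
  by (simp add: vec_eq_iff matrix_vector_mult_def sum_negf)

theorem mainTheorem1:
  fixes \<Omega> :: "(real ^ 'n::finite) set"
    and D :: "real ^ 'n \<Rightarrow> real ^ 'n ^ 'n"
    and f c Cp :: "real ^ 'n \<Rightarrow> real"
    and v :: "real ^ 'n \<Rightarrow> real ^ 'n"
  assumes domain: "open \<Omega>" "connected \<Omega>" "bounded \<Omega>" "\<Omega> \<noteq> {}"
    and D_sym: "\<forall>x\<in>closure \<Omega>. transpose (D x) = D x"
    and D_posdef: "\<forall>x\<in>closure \<Omega>. \<forall>u. u \<noteq> 0 \<longrightarrow> u \<bullet> (D x *v u) > 0"
    and D_C1: "\<forall>i j. C1_on \<Omega> (\<lambda>x. D x $ i $ j)"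
    and D_cont: "continuous_on (closure \<Omega>) D"
    and f_L2: "L2 \<Omega> f"
    and f_nonneg: "AE x in lebesgue_on \<Omega>. f x \<ge> 0"
    and cp: "H1 \<Omega> Cp"
    and c_H1: "H1 \<Omega> c"
    and v_Hdiv: "Hdiv \<Omega> v"
    and weak: "\<forall>q w. H1 \<Omega> q \<longrightarrow> Hdiv \<Omega> w \<longrightarrow>
        (LINT x|lebesgue_on \<Omega>. w x \<bullet> (matrix_inv (D x) *v v x))
      - (LINT x|lebesgue_on \<Omega>. wdiv \<Omega> w x * c x)
      + bdry_pair \<Omega> w Cp
      - (LINT x|lebesgue_on \<Omega>. q x * (wdiv \<Omega> v x - f x))
      - (1/2) * (LINT x|lebesgue_on \<Omega>.
            (matrix_inv (D x) *v w x + wgrad \<Omega> q x) \<bullet>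
            (D x *v (matrix_inv (D x) *v v x + wgrad \<Omega> c x))) = 0"
    and c_H2: "H2 \<Omega> c"
    and c_C1: "C1_on \<Omega> c"
    and c_C0: "continuous_on (closure \<Omega>) c"
  shows "(INF x\<in>closure \<Omega>. c x) = (INF x\<in>frontier \<Omega>. c x)"
proof -
  have O: "open \<Omega>" "bounded \<Omega>" using domain by auto
  obtain Gc where cder: "\<And>x. x \<in> \<Omega> \<Longrightarrow> (c has_derivative (\<lambda>h. Gc x \<bullet> h)) (at x)"
    and gcont: "continuous_on \<Omega> Gc"
    using c_C1 unfolding C1_on_def by blast
  have cls: "\<Omega> \<subseteq> closure \<Omega>" by (rule closure_subset)
  have Dinv_cl: "invertible (D x)" if "x \<in> closure \<Omega>" for x
    using posdef_invertible D_posdef that by blast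
  have Dinv: "\<And>x. x \<in> \<Omega> \<Longrightarrow> invertible (D x)" using Dinv_cl cls by blast
  have Dsym: "\<And>x. x \<in> \<Omega> \<Longrightarrow> transpose (D x) = D x" using D_sym cls by blast
  have Dpos: "\<And>x u. x \<in> \<Omega> \<Longrightarrow> u \<noteq> 0 \<Longrightarrow> u \<bullet> (D x *v u) > 0" using D_posdef cls by blast
  have Dc_cl: "continuous_on (closure \<Omega>) (\<lambda>x. D x *v axis j 1)" for j by (rule mv_cont[OF D_cont])
  have Dc: "\<And>j. continuous_on \<Omega> (\<lambda>x. D x *v axis j 1)" using Dc_cl continuous_on_subset[OF _ cls] by blast
  have Dic_cl: "continuous_on (closure \<Omega>) (\<lambda>x. matrix_inv (D x) *v axis j 1)" for j
    by (rule matrix_inv_continuous[OF D_cont Dinv_cl])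
  have Dic: "\<And>j. continuous_on \<Omega> (\<lambda>x. matrix_inv (D x) *v axis j 1)"
    using Dic_cl continuous_on_subset[OF _ cls] by blast
  have DiB: "\<exists>C. \<forall>x\<in>\<Omega>. \<forall>y. norm (matrix_inv (D x) *v y) \<le> C * norm y"
  proof -
    obtain C where "\<forall>x\<in>closure \<Omega>. \<forall>y. norm (matrix_inv (D x) *v y) \<le> C * norm y"
      using mv_bound[OF _ Dic_cl] O(2) by (metis compact_closure)
    then show ?thesis using cls by blast
  qed
  have Y0: "AE x in lebesgue_on \<Omega>. matrix_inv (D x) *v v x + wgrad \<Omega> c x = 0"
    by (rule step_v[OF O Dinv Dsym Dc Dic DiB cp c_H1 v_Hdiv cder gcont weak])
  have cL2: "L2 \<Omega> c" using c_H1 by (simp add: H1_def)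
  have gcGc: "AE x in lebesgue_on \<Omega>. wgrad \<Omega> c x = Gc x"
    by (rule C1_weak_grad_ae[OF O cder gcont wgrad_some[OF c_H1] cL2])
  have vD: "AE x in lebesgue_on \<Omega>. v x = - (D x *v Gc x)"
    using Y0 gcGc AE_in_dom[of \<Omega>]
  proof eventually_elim
    case (elim x)
    then have x: "x \<in> \<Omega>" by simp
    have "matrix_inv (D x) *v v x + Gc x = 0" using elim by simp
    then have "matrix_inv (D x) *v v x = 0 - Gc x" by (simp add: eq_neg_iff_add_eq_0)
    then have "D x *v (matrix_inv (D x) *v v x) = D x *v (0 - Gc x)" by simp
    then show ?case by (simp add: matrix_inv_mv(1)[OF Dinv[OF x]] mv_uminus)
  qed
  have vm: "v \<in> borel_measurable (lebesgue_on \<Omega>)" using v_Hdiv by (simp add: Hdiv_def L2v_def)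
  have Gcm: "Gc \<in> borel_measurable (lebesgue_on \<Omega>)" by (rule cont_meas_on[OF O(1) gcont])
  have DGcm: "(\<lambda>x. D x *v Gc x) \<in> borel_measurable (lebesgue_on \<Omega>)" by (rule mv_meas[OF O(1) Dc Gcm])
  have super: "(LINT x|lebesgue_on \<Omega>. (D x *v Gc x) \<bullet> dphi x) \<ge> 0"
    if t: "test_fun \<Omega> phi dphi" and nn: "\<And>x. phi x \<ge> 0" for phi dphi
  proof -
    have dm: "dphi \<in> borel_measurable (lebesgue_on \<Omega>)" using test_meas(2)[OF t O(1)] .
    have sq: "(LINT x|lebesgue_on \<Omega>. v x \<bullet> dphi x) = - (LINT x|lebesgue_on \<Omega>. phi x * f x)"
      by (rule step_q[OF O v_Hdiv f_L2 Y0 weak t])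
    have "(LINT x|lebesgue_on \<Omega>. (D x *v Gc x) \<bullet> dphi x) = (LINT x|lebesgue_on \<Omega>. - (v x \<bullet> dphi x))"
    proof (rule integral_cong_AE)
      show "(\<lambda>x. (D x *v Gc x) \<bullet> dphi x) \<in> borel_measurable (lebesgue_on \<Omega>)" using DGcm dm by measurable
      show "(\<lambda>x. - (v x \<bullet> dphi x)) \<in> borel_measurable (lebesgue_on \<Omega>)" using vm dm by measurable
      show "AE x in lebesgue_on \<Omega>. (D x *v Gc x) \<bullet> dphi x = - (v x \<bullet> dphi x)"
        using vD by eventually_elim simp
    qed
    also have "\<dots> = (LINT x|lebesgue_on \<Omega>. phi x * f x)" using sq by simp
    also have "\<dots> \<ge> 0"
      by (rule integral_nonneg_AE) (use f_nonneg nn in \<open>auto elim: AE_mp\<close>)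
    finally show ?thesis .
  qed
  show ?thesis
    by (rule min_principle[OF O(1,2) domain(2,4) cder gcont c_C0 Dpos Dsym Dc super])
qed


end
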